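(* For every irrational $\alpha\in(0,1)$, the sequence $(P_{q_n(\alpha)}(\alpha))_{n\in\mathbb N}$ has a convergent subsequence.
   Context: $P_N(\alpha)=\prod_{r=1}^N|2\sin(\pi r\alpha)|$, and $q_n(\alpha)$ is the $n$th best approximation (convergent) denominator of $\alpha$. *)

theory Defs
  imports "HOL-Analysis.Analysis"
begin

definition sudler :: "nat \<Rightarrow> real \<Rightarrow> real" where
  "sudler N \<alpha> = (\<Prod>r = 1..N. \<bar>2 * sin (pi * real r * \<alpha>)\<bar>)"

text \<open>Gauss map and continued fraction digits: alpha = [0; a_1, a_2, ...].\<close>
definition gauss_map :: "real \<Rightarrow> real" where
  "gauss_map x = frac (1 / x)"

definition cf_digit :: "real \<Rightarrow> nat \<Rightarrow> nat" where
  "cf_digit \<alpha> n = nat \<lfloor>1 / ((gauss_map ^^ (n - 1)) \<alpha>)\<rfloor>"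

fun cf_denom :: "real \<Rightarrow> nat \<Rightarrow> nat" where
  "cf_denom \<alpha> 0 = 1"
| "cf_denom \<alpha> (Suc 0) = cf_digit \<alpha> 1"
| "cf_denom \<alpha> (Suc (Suc n)) = cf_digit \<alpha> (n + 2) * cf_denom \<alpha> (Suc n) + cf_denom \<alpha> n"

end

theory Submission
  imports Defs "HOL-Computational_Algebra.Fundamental_Theorem_Algebra"
begin



lemma harm_approx:
  assumes "m \<ge> (1::nat)"
  shows "\<bar>harm m - ln (real m) - euler_mascheroni - 1 / (2 * real m)\<bar> \<le> 1 / (2 * real m ^ 2)"
proof -
  have lo: "euler_mascheroni \<ge> harm m - ln (real m + 1) + 1 / (2 * (real m + 1))"
    using euler_mascheroni_lower[of "m - 1"] assms by (simp add: Suc_diff_le add.commute)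
  have up: "euler_mascheroni \<le> harm m - ln (real m + 1) + 1 / (2 * real m)"
    using euler_mascheroni_upper[of "m - 1"] assms by (simp add: Suc_diff_le add.commute)
  have m: "real m \<ge> 1" using assms by simp
  have l1: "ln (real m + 1) - ln (real m) \<le> 1 * (inverse (real m) + inverse (real m + 1)) / 2"
    using ln_inverse_approx_le[of "real m" 1] m by simp
  have l2: "ln (real m + 1) - ln (real m) \<ge> 2 * (real m + 1 - real m) / (real m + (real m + 1))"
    using ln_inverse_approx_ge[of "real m" "real m + 1"] m by simp
  have a: "harm m - ln (real m) - euler_mascheroni - 1 / (2 * real m) \<le> 0"
  proof -
    have "harm m - ln (real m) - euler_mascheroni - 1 / (2 * real m) \<le>
          ln (real m + 1) - ln (real m) - 1 / (2 * (real m + 1)) - 1 / (2 * real m)"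
      using lo by linarith
    also have "\<dots> \<le> 0"
    proof -
      have "1 * (inverse (real m) + inverse (real m + 1)) / 2 = 1 / (2 * (real m + 1)) + 1 / (2 * real m)"
        using m by (simp add: field_split_simps)
      thus ?thesis using l1 by linarith
    qed
    finally show ?thesis .
  qed
  have b: "harm m - ln (real m) - euler_mascheroni - 1 / (2 * real m) \<ge> - (1 / (2 * real m ^ 2))"
  proof -
    have "harm m - ln (real m) - euler_mascheroni - 1 / (2 * real m) \<ge>
          ln (real m + 1) - ln (real m) - 1 / real m"
      using up by (simp add: field_simps)
    moreover have "ln (real m + 1) - ln (real m) - 1 / real m \<ge> - (1 / (2 * real m ^ 2))"
    proof -
      have q1: "2 * (real m + 1 - real m) / (real m + (real m + 1)) - 1 / real m = - (1 / (real m * (2 * real m + 1)))"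
        using m by (simp add: field_split_simps)
      have q2: "1 / (real m * (2 * real m + 1)) \<le> 1 / (2 * real m ^ 2)"
      proof (rule frac_le)
        show "0 < 2 * real m ^ 2" using m by simp
        show "2 * real m ^ 2 \<le> real m * (2 * real m + 1)" using m by (simp add: power2_eq_square algebra_simps)
      qed auto
      have "2 * (real m + 1 - real m) / (real m + (real m + 1)) - 1 / real m \<ge> - (1 / (2 * real m ^ 2))"
        using q1 q2 by linarith
      thus ?thesis using l2 by linarith
    qed
    ultimately show ?thesis by linarith
  qed
  show ?thesis using a b by (simp add: abs_if)
qed

definition stirl_d :: "nat \<Rightarrow> real" where
  "stirl_d K = ln (fact K) - (real K + 1/2) * ln (real K) + real K"

lemma stirl_d_bounds:
  assumes "K \<ge> (1::nat)"
  shows "3/4 \<le> stirl_d K \<and> stirl_d K \<le> 1"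
proof -
  have "3/4 + 1/(4 * real K) \<le> stirl_d K \<and> stirl_d K \<le> 1" using assms
  proof (induction K rule: dec_induct)
    case base
    then show ?case by (simp add: stirl_d_def)
  next
    case (step K)
    have K: "real K \<ge> 1" using step by simp
    have lf: "ln (fact (Suc K)) = ln (fact K) + ln (real K + 1)"
      by (simp add: ln_mult add.commute)
    have rec: "stirl_d (Suc K) = stirl_d K - (real K + 1/2) * (ln (real K + 1) - ln (real K)) + 1"
      unfolding stirl_d_def using K lf
      by (simp add: algebra_simps)
    have l1: "ln (real K + 1) - ln (real K) \<le> 1 * (inverse (real K) + inverse (real K + 1)) / 2"
      using ln_inverse_approx_le[of "real K" 1] K by simp
    have l2: "ln (real K + 1) - ln (real K) \<ge> 2 * (real K + 1 - real K) / (real K + (real K + 1))"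
      using ln_inverse_approx_ge[of "real K" "real K + 1"] K by simp
    have e1: "(real K + 1/2) * (ln (real K + 1) - ln (real K)) \<le> 1 + 1/(4 * real K) - 1/(4 * (real K + 1))"
    proof -
      have "(real K + 1/2) * (ln (real K + 1) - ln (real K)) \<le> (real K + 1/2) * (1 * (inverse (real K) + inverse (real K + 1)) / 2)"
        using l1 K by (intro mult_left_mono) auto
      also have "\<dots> = 1 + 1/(4 * real K) - 1/(4 * (real K + 1))"
        using K by (simp add: field_split_simps)
      finally show ?thesis .
    qed
    have e2: "(real K + 1/2) * (ln (real K + 1) - ln (real K)) \<ge> 1"
    proof -
      have "(real K + 1/2) * (ln (real K + 1) - ln (real K)) \<ge> (real K + 1/2) * (2 * (real K + 1 - real K) / (real K + (real K + 1)))"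
        using l2 K by (intro mult_left_mono) auto
      moreover have "(real K + 1/2) * (2 * (real K + 1 - real K) / (real K + (real K + 1))) = 1"
        using K by (simp add: field_simps)
      ultimately show ?thesis by linarith
    qed
    have h: "stirl_d (Suc K) \<ge> 3/4 + 1/(4 * (1 + real K))"
      using step.IH rec e1 by (simp add: add.commute)
    have h2: "stirl_d (Suc K) \<le> 1" using step.IH rec e2 by linarith
    show ?case unfolding of_nat_Suc using h h2 by linarith
  qed
  thus ?thesis using assms by (smt (verit) divide_nonneg_nonneg of_nat_0_le_iff)
qed



definition saw :: "real \<Rightarrow> real" where
  "saw y = y - of_int \<lfloor>y\<rfloor> - 1/2"

definition Gs :: "real \<Rightarrow> nat \<Rightarrow> real" where
  "Gs x N = (\<Sum>j=1..N. saw (real j * x) / real j)"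

lemma harm_diff:
  assumes "m \<le> N"
  shows "harm N - harm m = (\<Sum>j\<in>{m<..N}. 1 / real j)"
  using assms
proof (induction N rule: dec_induct)
  case base
  then show ?case by simp
next
  case (step N)
  have "{m<..Suc N} = insert (Suc N) {m<..N}" using step by auto
  hence "(\<Sum>j\<in>{m<..Suc N}. 1 / real j) = 1 / real (Suc N) + (\<Sum>j\<in>{m<..N}. 1 / real j)"
    by simp
  moreover have "harm (Suc N) = harm N + 1 / real (Suc N)"
    by (simp add: harm_Suc divide_inverse)
  ultimately show ?case using step by linarith
qed

lemma sum_div_swap:
  fixes s q N :: nat
  assumes s: "s \<ge> 1" and cop: "coprime s q" and N: "N < q"
  shows "(\<Sum>j=1..N. real (j * s div q) / real j) =
         (\<Sum>k=1..N * s div q. harm N - harm (k * q div s))"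
proof -
  define K where "K = N * s div q"
  have q: "q > 0" using N by simp
  have Ks: "K < s" unfolding K_def using q N s
    by (simp add: div_less_iff_less_mult)
  have cnt: "real (j * s div q) = (\<Sum>k=1..K. if k * q \<le> j * s then 1 else 0)" if j: "j \<le> N" for j
  proof -
    have "j * s div q \<le> K" unfolding K_def using j by (intro div_le_mono) simp
    have e: "k * q \<le> j * s \<longleftrightarrow> k \<le> j * s div q" for k
      using less_eq_div_iff_mult_less_eq[OF q, of k "j * s"] by simp
    have "{k\<in>{1..K}. k * q \<le> j * s} = {1..j * s div q}"
      using \<open>j * s div q \<le> K\<close> by (auto simp: e)
    hence "(\<Sum>k=1..K. if k * q \<le> j * s then 1 else 0 :: real) = card {1..j * s div q}"
      using sum.inter_filter[of "{1..K}" "\<lambda>_. 1::real" "\<lambda>k. k * q \<le> j * s"] by simp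
    thus ?thesis by simp
  qed
  have "(\<Sum>j=1..N. real (j * s div q) / real j) =
        (\<Sum>j=1..N. \<Sum>k=1..K. (if k * q \<le> j * s then 1 / real j else 0))"
    by (intro sum.cong refl) (auto simp: cnt sum_divide_distrib intro!: sum.cong)
  also have "\<dots> = (\<Sum>k=1..K. \<Sum>j=1..N. (if k * q \<le> j * s then 1 / real j else 0))"
    by (rule sum.swap)
  also have "\<dots> = (\<Sum>k=1..K. harm N - harm (k * q div s))"
  proof (intro sum.cong refl)
    fix k assume k: "k \<in> {1..K}"
    define m where "m = k * q div s"
    have nd: "\<not> s dvd k * q"
    proof
      assume "s dvd k * q"
      hence "s dvd k" using cop by (simp add: coprime_dvd_mult_left_iff)
      thus False using k Ks by (auto dest: dvd_imp_le)
    qed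
    have mN: "m \<le> N"
    proof -
      have "k * q \<le> K * q" using k by simp
      also have "K * q \<le> N * s" unfolding K_def by simp
      finally have "k * q \<le> N * s" .
      hence "k * q div s \<le> N * s div s" by (rule div_le_mono)
      thus ?thesis using s by (simp add: m_def)
    qed
    have iff: "k * q \<le> j * s \<longleftrightarrow> m < j" for j
    proof -
      have dm: "k * q = m * s + k * q mod s" by (simp add: m_def)
      have r: "0 < k * q mod s" "k * q mod s < s" using nd s
        by (auto simp: dvd_eq_mod_eq_0)
      show ?thesis
      proof
        assume "k * q \<le> j * s"
        hence "m * s < j * s" using dm r by linarith
        thus "m < j" by simp
      next
        assume "m < j"
        hence "Suc m * s \<le> j * s" by (intro mult_le_mono1) simp
        thus "k * q \<le> j * s" using dm r by simp
      qed
    qed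
    have "(\<Sum>j=1..N. (if k * q \<le> j * s then 1 / real j else 0)) = (\<Sum>j\<in>{j\<in>{1..N}. m < j}. 1 / real j)"
      using sum.inter_filter[of "{1..N}" "\<lambda>j. 1 / real j" "\<lambda>j. m < j"] by (simp add: iff)
    also have "{j\<in>{1..N}. m < j} = {m<..N}" by auto
    also have "(\<Sum>j\<in>{m<..N}. 1 / real j) = harm N - harm m"
      using harm_diff[OF mN] by simp
    finally show "(\<Sum>j=1..N. (if k * q \<le> j * s then 1 / real j else 0)) = harm N - harm (k * q div s)"
      by (simp add: m_def)
  qed
  finally show ?thesis by (simp add: K_def)
qed

lemma Gs_exact:
  fixes s q N :: nat
  assumes s: "s \<ge> 1" and cop: "coprime s q" and N: "N < q"
  shows "Gs (real s / real q) N = real N * real s / real q - (real (N * s div q) + 1/2) * harm N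
           + (\<Sum>k=1..N * s div q. harm (k * q div s))"
proof -
  have q: "q > 0" using N by simp
  have sw: "saw (real j * (real s / real q)) = real j * real s / real q - real (j * s div q) - 1/2" for j
  proof -
    have "real j * (real s / real q) = real (j * s) / real q" by simp
    moreover have "\<lfloor>real (j * s) / real q\<rfloor> = int (j * s div q)"
      by (rule floor_divide_of_nat_eq)
    ultimately show ?thesis unfolding saw_def by simp
  qed
  have "Gs (real s / real q) N = (\<Sum>j=1..N. real s / real q - real (j * s div q) / real j - 1/2 * (1 / real j))"
    unfolding Gs_def
  proof (intro sum.cong refl)
    fix j assume j: "j \<in> {1..N}"
    show "saw (real j * (real s / real q)) / real j =
          real s / real q - real (j * s div q) / real j - 1/2 * (1 / real j)"
    proof -
      have jp: "real j > 0" using j by simp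
      have "saw (real j * (real s / real q)) / real j = (real j * real s / real q - real (j * s div q) - 1/2) / real j"
        by (simp only: sw)
      also have "\<dots> = real s / real q - real (j * s div q) / real j - 1/2 * (1 / real j)"
        using jp by (simp add: diff_divide_distrib)
      finally show ?thesis .
    qed
  qed
  also have "\<dots> = (\<Sum>j=1..N. real s / real q) - (\<Sum>j=1..N. real (j * s div q) / real j) - (\<Sum>j=1..N. 1/2 * (1 / real j))"
    by (simp only: sum_subtractf)
  also have "(\<Sum>j=1..N. real s / real q) = real N * real s / real q" by simp
  also have "(\<Sum>j=1..N. 1/2 * (1 / real j)) = 1/2 * harm N"
    by (simp only: sum_distrib_left[symmetric] harm_def divide_inverse mult_1)
  also have "(\<Sum>j=1..N. real (j * s div q) / real j) = (\<Sum>k=1..N * s div q. harm N - harm (k * q div s))"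
    by (rule sum_div_swap[OF s cop N])
  also have "\<dots> = real (N * s div q) * harm N - (\<Sum>k=1..N * s div q. harm (k * q div s))"
    by (simp add: sum_subtractf)
  finally show ?thesis by (simp only: distrib_right)
qed


lemma saw_add_nat: "saw (y + real n) = saw y"
  unfolding saw_def by simp

lemma harm_floor_approx:
  fixes m :: nat and x :: real
  assumes mx: "real m \<le> x" "x < real m + 1" and m1: "1 \<le> m"
  shows "\<bar>harm m - (ln x + euler_mascheroni - (x - real m - 1/2) / x)\<bar> \<le> 5 / x^2"
proof -
  define A where "A = harm m - ln (real m) - euler_mascheroni - 1 / (2 * real m)"
  have A: "\<bar>A\<bar> \<le> 1 / (2 * real m ^ 2)" unfolding A_def by (rule harm_approx[OF m1])
  have mpos: "real m \<ge> 1" using m1 by simp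
  have xpos: "x > 0" using mx mpos by linarith
  have x2m: "x \<le> 2 * real m" using mx mpos by linarith
  define u where "u = (x - real m) / x"
  have u0: "0 \<le> u" unfolding u_def using mx xpos by simp
  have uh: "u \<le> 1/2" unfolding u_def using x2m xpos by (simp add: field_simps)
  have ux: "u \<le> 1 / x" unfolding u_def using mx xpos by (simp add: divide_right_mono)
  have mu: "real m = x * (1 - u)" unfolding u_def using xpos by (simp add: field_simps)
  have lnm: "ln (real m) = ln x + ln (1 - u)"
    using mu xpos uh by (simp add: ln_mult)
  have l1: "ln (1 - u) \<ge> - u - 2 * u^2" using ln_one_minus_pos_lower_bound[OF u0 uh] by simp
  have l2: "ln (1 - u) \<le> - u" using ln_le_minus_one[of "1 - u"] uh by simp
  have u2: "u^2 \<le> 1 / x^2"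
  proof -
    have "u^2 \<le> (1/x)^2" using u0 ux by (intro power_mono) auto
    thus ?thesis by (simp add: power_divide)
  qed
  have d1: "0 \<le> 1 / (2 * real m) - 1 / (2 * x)"
    using mx mpos by (simp add: field_simps)
  have d2: "1 / (2 * real m) - 1 / (2 * x) \<le> 1 / x^2"
  proof -
    have "1 / (2 * real m) - 1 / (2 * x) = (x - real m) / (2 * real m * x)"
      using mpos xpos by (simp add: field_simps)
    also have "\<dots> \<le> 1 / (2 * real m * x)"
      using mx mpos xpos by (intro divide_right_mono) auto
    also have "\<dots> \<le> 1 / (x * x)"
      using x2m xpos mpos by (intro divide_left_mono) (auto simp: mult_right_mono)
    finally show ?thesis by (simp add: power2_eq_square)
  qed
  have a2: "1 / (2 * real m ^ 2) \<le> 2 / x^2"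
  proof -
    have "x^2 \<le> (2 * real m)^2" using x2m xpos by (intro power_mono) auto
    hence "x^2 \<le> 4 * real m ^ 2" by (simp add: power_mult_distrib)
    thus ?thesis using xpos mpos by (simp add: field_simps)
  qed
  have eq: "harm m - (ln x + euler_mascheroni - (x - real m - 1/2) / x) =
        (ln (1 - u) + u) + (1 / (2 * real m) - 1 / (2 * x)) + A"
    unfolding A_def using lnm xpos by (simp add: u_def field_simps)
  show ?thesis unfolding eq using A a2 d1 d2 l1 l2 u2 by (simp add: abs_le_iff)
qed

lemma sum_inv_sq_le: "(\<Sum>k=1..K. 1 / real k ^ 2) \<le> 2 - 1 / real (max 1 K)"
proof (induction K)
  case 0
  then show ?case by simp
next
  case (Suc K)
  show ?case
  proof (cases "K = 0")
    case True
    then show ?thesis by simp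
  next
    case False
    hence K: "real K \<ge> 1" by simp
    have "(\<Sum>k=1..Suc K. 1 / real k ^ 2) = (\<Sum>k=1..K. 1 / real k ^ 2) + 1 / (real K + 1)^2"
      by simp
    also have "\<dots> \<le> 2 - 1 / real K + 1 / (real K + 1)^2"
      using Suc False by (simp add: max_def)
    also have "\<dots> \<le> 2 - 1 / (real K + 1)"
    proof -
      have e: "1 / real K - 1 / (real K + 1) = 1 / (real K * (real K + 1))"
        using K by (simp add: field_simps)
      have "1 / (real K + 1)^2 \<le> 1 / (real K * (real K + 1))"
        unfolding power2_eq_square using K by (intro divide_left_mono mult_right_mono) auto
      hence "1 / (real K + 1)^2 \<le> 1 / real K - 1 / (real K + 1)" using e by simp
      thus ?thesis by linarith
    qed
    finally show ?thesis by (simp add: max_def add.commute)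
  qed
qed

lemma sum_inv_sq_le2: "(\<Sum>k=1..K. 1 / real k ^ 2) \<le> 2"
  using sum_inv_sq_le[of K] by (smt (verit) divide_nonneg_nonneg of_nat_0_le_iff)

lemma arith_aux_M:
  fixes d b1 b2 b3 l2 lr st g :: real
  assumes "0 \<le> d" "d < 1" "b1 \<le> d" "0 \<le> b1" "0 \<le> b2" "b2 \<le> l2 + lr" "l2 \<le> 1"
    "b3 \<le> 3/2" "- b3 \<le> 3/2" "3/4 \<le> st" "st \<le> 1" "0 \<le> g" "g \<le> 1" "0 \<le> lr"
  shows "\<bar>d - b1 - 1/2 * b2 - g / 2 - b3 + st\<bar> \<le> 4 + lr"
  using assms by (intro abs_leI) linarith+

lemma main_term_bound:
  fixes N K :: nat and \<rho> :: real
  assumes \<rho>: "\<rho> \<ge> 1" and K1: "real K \<le> real N / \<rho>" and K2: "real N / \<rho> < real K + 1"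
  shows "\<bar>real N / \<rho> - (real K + 1/2) * harm N + real K * ln \<rho> + ln (fact K) + real K * euler_mascheroni\<bar>
           \<le> 4 + ln \<rho>"
proof -
  define X where "X = real N / \<rho>"
  define \<gamma> :: real where "\<gamma> = euler_mascheroni"
  have g0: "0 \<le> \<gamma>" "\<gamma> \<le> 1" unfolding \<gamma>_def
    using euler_mascheroni_pos euler_mascheroni_less_13_over_22 by auto
  have lr: "ln \<rho> \<ge> 0" using \<rho> by simp
  have XN: "X \<le> real N"
  proof -
    have "real N / \<rho> \<le> real N / 1" using \<rho> by (intro divide_left_mono) auto
    thus ?thesis unfolding X_def by simp
  qed
  show ?thesis
  proof (cases "K = 0")
    case True
    show ?thesis
    proof (cases "N = 0")
      case True
      then show ?thesis using \<open>K = 0\<close> lr by (simp add: harm_def)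
    next
      case False
      hence N1: "N \<ge> 1" by simp
      have hA: "\<bar>harm N - ln (real N) - \<gamma> - 1 / (2 * real N)\<bar> \<le> 1 / (2 * real N ^ 2)"
        unfolding \<gamma>_def by (rule harm_approx[OF N1])
      have "1 / (2 * real N ^ 2) \<le> 1/2" using N1 by (simp add: field_simps)
      moreover have "1 / (2 * real N) \<le> 1/2" using N1 by (simp add: field_simps)
      ultimately have hN: "harm N \<le> ln (real N) + 2" using hA g0 by (simp add: abs_le_iff; linarith)
      have Nr: "real N < \<rho>" using K2 True \<rho> by (simp add: field_simps)
      have "ln (real N) \<le> ln \<rho>" using Nr N1 by simp
      moreover have "ln (real N) \<ge> 0" using N1 by simp
      moreover have "harm N \<ge> (0::real)" by (rule harm_nonneg)
      moreover have "0 \<le> real N / \<rho>" "real N / \<rho> < 1" using K2 True \<rho> by auto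
      ultimately show ?thesis using True hN by (simp add: abs_le_iff; linarith)
    qed
  next
    case False
    hence K1': "real K \<ge> 1" by simp
    have Kpos: "real K > 0" using K1' by simp
    have Xpos: "X > 0" using K1 K1' unfolding X_def by linarith
    have N1: "N \<ge> 1" using XN K1 K1' unfolding X_def by linarith
    have Npos: "real N > 0" using N1 by simp
    have hA: "\<bar>harm N - ln (real N) - \<gamma> - 1 / (2 * real N)\<bar> \<le> 1 / (2 * real N ^ 2)"
      unfolding \<gamma>_def by (rule harm_approx[OF N1])
    define A where "A = harm N - ln (real N) - \<gamma> - 1 / (2 * real N)"
    have st: "3/4 \<le> stirl_d K" "stirl_d K \<le> 1" using stirl_d_bounds[of K] False by auto
    have lf: "ln (fact K) = stirl_d K + (real K + 1/2) * ln (real K) - real K"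
      unfolding stirl_d_def by simp
    have lX: "ln X = ln (real N) - ln \<rho>" unfolding X_def using Npos \<rho> by (simp add: ln_div)
    have f1a: "ln X - ln (real K) \<ge> 0" using K1 Kpos unfolding X_def by simp
    have f1b: "real K * (ln X - ln (real K)) \<le> X - real K"
    proof -
      have "ln X - ln (real K) = ln (X / real K)" using Xpos Kpos by (simp add: ln_div)
      also have "\<dots> \<le> X / real K - 1" using Xpos Kpos by (intro ln_le_minus_one) simp
      finally have "real K * (ln X - ln (real K)) \<le> real K * (X / real K - 1)"
        using Kpos by (intro mult_left_mono) auto
      also have "\<dots> = X - real K" using Kpos by (simp add: field_simps)
      finally show ?thesis .
    qed
    have f1c: "real K * (ln X - ln (real K)) \<ge> 0" using f1a Kpos by simp
    have f2a: "ln (real N) - ln (real K) \<ge> 0" using K1 XN Kpos unfolding X_def by simp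
    have f2b: "ln (real N) - ln (real K) \<le> ln 2 + ln \<rho>"
    proof -
      have "real N < (real K + 1) * \<rho>" using K2 \<rho> by (simp add: field_simps)
      also have "\<dots> \<le> 2 * real K * \<rho>" using K1' \<rho> by (intro mult_right_mono) auto
      finally have "ln (real N) \<le> ln (2 * real K * \<rho>)" using Npos by (intro ln_mono) auto
      also have "\<dots> = ln 2 + ln (real K) + ln \<rho>" using Kpos \<rho> by (simp add: ln_mult)
      finally show ?thesis by simp
    qed
    have l2: "ln (2::real) \<le> 1" using ln_le_minus_one[of 2] by simp
    have KN: "real K \<le> real N" using K1 XN unfolding X_def by linarith
    have f3: "\<bar>(real K + 1/2) * (1 / (2 * real N) + A)\<bar> \<le> 3/2"
    proof -
      have hA': "\<bar>A\<bar> \<le> 1 / (2 * real N ^ 2)" using hA unfolding A_def .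
      have "\<bar>1 / (2 * real N) + A\<bar> \<le> \<bar>1 / (2 * real N)\<bar> + \<bar>A\<bar>" by (rule abs_triangle_ineq)
      hence "\<bar>1 / (2 * real N) + A\<bar> \<le> 1 / (2 * real N) + 1 / (2 * real N ^ 2)"
        using hA' by simp
      also have "1 / (2 * real N ^ 2) \<le> 1 / (2 * real N)"
        using N1 by (simp add: field_simps power2_eq_square)
      finally have b: "\<bar>1 / (2 * real N) + A\<bar> \<le> 1 / real N" by simp
      have "\<bar>(real K + 1/2) * (1 / (2 * real N) + A)\<bar> = (real K + 1/2) * \<bar>1 / (2 * real N) + A\<bar>"
        using Kpos by (simp add: abs_mult)
      also have "\<dots> \<le> (real K + 1/2) * (1 / real N)"
        using b Kpos by (intro mult_left_mono) auto
      also have "\<dots> \<le> 3/2" using KN N1 by (simp add: field_simps)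
      finally show ?thesis .
    qed
    have hN: "harm N = ln (real N) + \<gamma> + 1 / (2 * real N) + A" unfolding A_def by simp
    have eq: "real N / \<rho> - (real K + 1/2) * harm N + real K * ln \<rho> + ln (fact K) + real K * euler_mascheroni
       = (X - real K) - real K * (ln X - ln (real K)) - (1/2) * (ln (real N) - ln (real K)) - \<gamma> / 2
         - (real K + 1/2) * (1 / (2 * real N) + A) + stirl_d K"
    proof -
      have lr': "ln \<rho> = ln (real N) - ln X" using lX by simp
      show ?thesis unfolding hN lf X_def[symmetric] \<gamma>_def[symmetric] lr' by (simp add: algebra_simps)
    qed
    have XK: "0 \<le> X - real K" "X - real K < 1" using K1 K2 unfolding X_def by auto
    have f3a: "(real K + 1/2) * (1 / (2 * real N) + A) \<le> 3/2" "- ((real K + 1/2) * (1 / (2 * real N) + A)) \<le> 3/2"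
      using f3 by (auto dest: abs_le_D1 abs_le_D2)
    show ?thesis unfolding eq by (rule arith_aux_M[OF XK f1b f1c f2a f2b l2 f3a st g0 lr])
  qed
qed


lemma ln_fact_sum: "ln (fact K :: real) = (\<Sum>k=1..K. ln (real k))"
proof (induction K)
  case 0
  then show ?case by simp
next
  case (Suc K)
  have "ln (fact (Suc K) :: real) = ln (fact K) + ln (real (Suc K))"
    by (simp add: ln_mult)
  then show ?case using Suc by simp
qed

lemma nat_div_real_bounds:
  fixes m n :: nat
  assumes "n > 0"
  shows "real (m div n) \<le> real m / real n" "real m / real n < real (m div n) + 1"
proof -
  have f: "\<lfloor>real m / real n\<rfloor> = int (m div n)" by (rule floor_divide_of_nat_eq)
  show "real (m div n) \<le> real m / real n"
    using of_int_floor_le[of "real m / real n"] f by simp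
  show "real m / real n < real (m div n) + 1"
    using real_of_int_floor_add_one_gt[of "real m / real n"] f by simp
qed

lemma saw_rec:
  fixes s q t a N :: nat
  assumes s: "s \<ge> 1" and cop: "coprime s q" and qa: "q = a * s + t" and N: "N < q" and sq: "s \<le> q"
  shows "\<bar>Gs (real s / real q) N + (real s / real q) * Gs (real t / real s) (N * s div q)\<bar>
           \<le> 14 + ln (real q / real s)"
proof -
  define K where "K = N * s div q"
  define \<rho> where "\<rho> = real q / real s"
  define \<gamma> :: real where "\<gamma> = euler_mascheroni"
  have spos: "real s > 0" using s by simp
  have qpos: "q > 0" using N by simp
  have \<rho>1: "\<rho> \<ge> 1" unfolding \<rho>_def using sq spos by simp
  have \<rho>pos: "\<rho> > 0" using \<rho>1 by simp
  define R where "R k = harm (k * q div s) - (ln (real k) + ln \<rho> + \<gamma> - (real s / real q) * (saw (real k * (real t / real s)) / real k))" for k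
  have Rb: "\<bar>R k\<bar> \<le> 5 / real k ^ 2" if k: "k \<in> {1..K}" for k
  proof -
    define x where "x = real k * \<rho>"
    define m where "m = k * q div s"
    have kpos: "real k \<ge> 1" using k by simp
    have x_eq: "x = real (k * q) / real s" unfolding x_def \<rho>_def by simp
    have m1: "real m \<le> x" "x < real m + 1"
      unfolding x_eq m_def using nat_div_real_bounds[of s "k * q"] s by auto
    have xk: "x \<ge> real k" unfolding x_def using \<rho>1 kpos by (simp add: mult_le_cancel_left1)
    have mge: "1 \<le> m"
    proof -
      have "q \<le> k * q" using k by simp
      hence "s \<le> k * q" using sq by linarith
      thus ?thesis unfolding m_def using s less_eq_div_iff_mult_less_eq[of s 1 "k * q"] by simp
    qed
    have H: "\<bar>harm m - (ln x + euler_mascheroni - (x - real m - 1/2) / x)\<bar> \<le> 5 / x^2"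
      by (rule harm_floor_approx[OF m1 mge])
    have flx: "\<lfloor>x\<rfloor> = int m"
      unfolding x_eq m_def by (rule floor_divide_of_nat_eq)
    have sawx: "saw x = x - real m - 1/2" unfolding saw_def flx by simp
    have xt: "x = real k * (real t / real s) + real (k * a)"
      unfolding x_eq qa using spos by (simp add: field_simps)
    have saw2: "saw x = saw (real k * (real t / real s))"
      unfolding xt by (rule saw_add_nat)
    have lnx: "ln x = ln (real k) + ln \<rho>" unfolding x_def using kpos \<rho>pos by (simp add: ln_mult)
    have fr: "(x - real m - 1/2) / x = (real s / real q) * (saw (real k * (real t / real s)) / real k)"
    proof -
      have "(x - real m - 1/2) / x = saw (real k * (real t / real s)) / x" using sawx saw2 by simp
      also have "\<dots> = (real s / real q) * (saw (real k * (real t / real s)) / real k)"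
        unfolding x_def \<rho>_def using kpos spos qpos by (simp add: field_simps)
      finally show ?thesis .
    qed
    have "R k = harm m - (ln x + euler_mascheroni - (x - real m - 1/2) / x)"
      unfolding fr unfolding R_def lnx m_def \<gamma>_def by simp
    hence "\<bar>R k\<bar> \<le> 5 / x^2" using H by simp
    also have "\<dots> \<le> 5 / real k ^ 2"
      using xk kpos by (intro divide_left_mono power_mono) auto
    finally show ?thesis .
  qed
  have sumR: "\<bar>\<Sum>k=1..K. R k\<bar> \<le> 10"
  proof -
    have "\<bar>\<Sum>k=1..K. R k\<bar> \<le> (\<Sum>k=1..K. \<bar>R k\<bar>)" by (rule sum_abs)
    also have "\<dots> \<le> (\<Sum>k=1..K. 5 / real k ^ 2)" by (intro sum_mono Rb)
    also have "\<dots> = 5 * (\<Sum>k=1..K. 1 / real k ^ 2)" by (simp add: sum_distrib_left)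
    also have "\<dots> \<le> 5 * 2" using sum_inv_sq_le2[of K] by (intro mult_left_mono) auto
    finally show ?thesis by simp
  qed
  have sumH: "(\<Sum>k=1..K. harm (k * q div s)) =
      ln (fact K) + real K * ln \<rho> + real K * \<gamma> - (real s / real q) * Gs (real t / real s) K + (\<Sum>k=1..K. R k)"
  proof -
    have "(\<Sum>k=1..K. harm (k * q div s)) = (\<Sum>k=1..K. ln (real k) + (ln \<rho> + \<gamma>) - (real s / real q) * (saw (real k * (real t / real s)) / real k) + R k)"
      unfolding R_def by (intro sum.cong refl) simp
    also have "\<dots> = (\<Sum>k=1..K. ln (real k)) + real K * (ln \<rho> + \<gamma>) - (real s / real q) * (\<Sum>k=1..K. saw (real k * (real t / real s)) / real k) + (\<Sum>k=1..K. R k)"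
      by (simp add: sum.distrib sum_subtractf sum_distrib_left)
    finally show ?thesis unfolding ln_fact_sum Gs_def by (simp add: algebra_simps)
  qed
  have ex: "Gs (real s / real q) N = real N * real s / real q - (real K + 1/2) * harm N
           + (\<Sum>k=1..K. harm (k * q div s))"
    unfolding K_def by (rule Gs_exact[OF s cop N])
  have KX: "real K \<le> real N / \<rho>" "real N / \<rho> < real K + 1"
  proof -
    have e: "real N / \<rho> = real (N * s) / real q" unfolding \<rho>_def using spos by simp
    show "real K \<le> real N / \<rho>" "real N / \<rho> < real K + 1"
      unfolding e K_def using nat_div_real_bounds[of q "N * s"] qpos by auto
  qed
  have M: "\<bar>real N / \<rho> - (real K + 1/2) * harm N + real K * ln \<rho> + ln (fact K) + real K * euler_mascheroni\<bar>
           \<le> 4 + ln \<rho>" by (rule main_term_bound[OF \<rho>1 KX])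
  have Nr: "real N * real s / real q = real N / \<rho>" unfolding \<rho>_def by simp
  have total: "Gs (real s / real q) N + (real s / real q) * Gs (real t / real s) K =
      (real N / \<rho> - (real K + 1/2) * harm N + real K * ln \<rho> + ln (fact K) + real K * euler_mascheroni)
      + (\<Sum>k=1..K. R k)"
    unfolding ex sumH Nr \<gamma>_def by simp
  have "\<bar>Gs (real s / real q) N + (real s / real q) * Gs (real t / real s) K\<bar> \<le> (4 + ln \<rho>) + 10"
    unfolding total using M sumR by (rule order.trans[OF abs_triangle_ineq add_mono])
  thus ?thesis unfolding K_def \<rho>_def by simp
qed


lemma prod_one_minus_roots:
  assumes q: "q \<ge> (1::nat)"
  shows "(\<Prod>k\<in>{1..<q}. (1 - cis (2 * pi * real k / real q))) = (of_nat q :: complex)"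
proof -
  define \<omega> where "\<omega> k = cis (2 * pi * real k / real q)" for k
  define p :: "complex poly" where "p = monom 1 q - 1"
  have polyp: "poly p z = z ^ q - 1" for z unfolding p_def by (simp add: poly_monom)
  have dp: "pderiv p = monom (of_nat q) (q - 1)" unfolding p_def by (simp add: pderiv_diff pderiv_monom)
  have rsq: "rsquarefree p" unfolding rsquarefree_roots
  proof (intro allI notI)
    fix a assume a: "poly p a = 0 \<and> poly (pderiv p) a = 0"
    hence a1: "a ^ q = 1" using polyp by simp
    hence "a \<noteq> 0" using q by (auto simp: power_0_left)
    moreover have "of_nat q * a ^ (q - 1) = 0" using a dp by (simp add: poly_monom)
    ultimately show False using q by simp
  qed
  have lc: "lead_coeff p = 1"
  proof -
    have e: "p = (- 1) + monom 1 q" unfolding p_def by simp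
    have "degree (- 1 :: complex poly) < degree (monom (1::complex) q)"
      using q by (simp add: degree_monom_eq)
    hence "lead_coeff ((- 1) + monom (1::complex) q) = lead_coeff (monom 1 q)"
      by (rule lead_coeff_add_le)
    thus ?thesis unfolding e by (simp only: lead_coeff_monom)
  qed
  have dec: "(\<Prod>z | poly p z = 0. [:-z, 1:]) = p"
    using complex_poly_decompose_rsquarefree[OF rsq] lc by simp
  have roots: "{z. poly p z = 0} = {z. z ^ q = 1}" using polyp by auto
  have b: "bij_betw \<omega> {..<q} {z. z ^ q = 1}"
    unfolding \<omega>_def by (rule Complex.bij_betw_roots_unity) (use q in simp)
  have "(\<Prod>z | z ^ q = 1. [:-z, 1:]) = (\<Prod>k<q. [:-\<omega> k, 1:])"
    by (rule prod.reindex_bij_betw[OF b, symmetric])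
  also have "{..<q} = insert 0 {1..<q}" using q by auto
  also have "(\<Prod>k\<in>insert 0 {1..<q}. [:-\<omega> k, 1:]) = [:-1, 1:] * (\<Prod>k\<in>{1..<q}. [:-\<omega> k, 1:])"
    by (simp add: \<omega>_def)
  finally have p1: "p = [:-1, 1:] * (\<Prod>k\<in>{1..<q}. [:-\<omega> k, 1:])"
    using dec roots by simp
  have p2: "p = [:-1, 1:] * (\<Sum>i<q. [:0, 1:] ^ i)"
  proof -
    have "([:0, 1:] :: complex poly) ^ q - 1 = ([:0, 1:] - 1) * (\<Sum>i<q. [:0, 1:] ^ i)"
      by (rule power_diff_1_eq)
    moreover have "([:0, 1:] :: complex poly) ^ q = monom 1 q" by (simp add: monom_altdef)
    moreover have "([:0, 1:] :: complex poly) - 1 = [:-1, 1:]" by (simp add: one_pCons)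
    ultimately show ?thesis unfolding p_def by simp
  qed
  have nz: "[:-1, 1::complex:] \<noteq> 0" by simp
  have "[:-1, 1:] * (\<Sum>i<q. [:0, 1:] ^ i) = [:-1, 1:] * (\<Prod>k\<in>{1..<q}. [:-\<omega> k, 1:])"
    using p1 p2 by metis
  hence "(\<Sum>i<q. [:0, 1:] ^ i) = (\<Prod>k\<in>{1..<q}. [:-\<omega> k, 1:])"
    using mult_left_cancel[OF nz] by blast
  hence "poly (\<Sum>i<q. [:0, 1:] ^ i) 1 = poly (\<Prod>k\<in>{1..<q}. [:-\<omega> k, 1:]) (1::complex)" by simp
  thus ?thesis by (simp add: poly_sum poly_prod \<omega>_def)
qed

lemma norm_one_minus_cis: "norm (1 - cis \<phi>) = 2 * \<bar>sin (\<phi> / 2)\<bar>"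
proof -
  have "norm (1 - cis \<phi>) ^ 2 = (1 - cos \<phi>)^2 + (sin \<phi>)^2"
    by (simp add: cmod_power2)
  also have "\<dots> = 2 - 2 * cos \<phi>"
    using sin_cos_squared_add[of \<phi>] by (simp add: power2_eq_square algebra_simps)
  also have "cos \<phi> = 1 - 2 * sin (\<phi> / 2) ^ 2"
    using cos_double_sin[of "\<phi> / 2"] by simp
  finally have "norm (1 - cis \<phi>) ^ 2 = (2 * \<bar>sin (\<phi> / 2)\<bar>) ^ 2"
    by (simp add: power_mult_distrib)
  thus ?thesis by (rule power2_eq_imp_eq) auto
qed

lemma prod_sin:
  assumes q: "q \<ge> (1::nat)"
  shows "(\<Prod>j\<in>{1..<q}. 2 * sin (pi * real j / real q)) = real q"
proof -
  have "(\<Prod>j\<in>{1..<q}. 2 * sin (pi * real j / real q)) = (\<Prod>j\<in>{1..<q}. norm (1 - cis (2 * pi * real j / real q)))"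
  proof (intro prod.cong refl)
    fix j assume j: "j \<in> {1..<q}"
    have "0 < pi * real j / real q" using j by simp
    moreover have "pi * real j / real q < pi" using j by (simp add: field_simps)
    ultimately have "sin (pi * real j / real q) > 0" by (intro sin_gt_zero)
    thus "2 * sin (pi * real j / real q) = norm (1 - cis (2 * pi * real j / real q))"
      unfolding norm_one_minus_cis by simp
  qed
  also have "\<dots> = norm (\<Prod>j\<in>{1..<q}. (1 - cis (2 * pi * real j / real q)))"
    by (simp add: prod_norm)
  also have "\<dots> = real q" using prod_one_minus_roots[OF q] by simp
  finally show ?thesis .
qed


lemma sin_minus_x_bound: "\<bar>sin x - x\<bar> \<le> \<bar>x\<bar> ^ 3 / 6" for x :: real
proof -
  have "\<bar>sin x - (\<Sum>m<3. sin_coeff m * x ^ m)\<bar> \<le> inverse (fact 3) * \<bar>x\<bar> ^ 3"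
    by (rule Maclaurin_sin_bound)
  moreover have "(\<Sum>m<3. sin_coeff m * x ^ m) = x"
    by (simp add: sin_coeff_def eval_nat_numeral)
  moreover have "inverse (fact 3 :: real) = 1 / 6" by (simp add: eval_nat_numeral)
  ultimately show ?thesis by simp
qed

lemma x_cos_le_sin:
  assumes "0 \<le> z" "z \<le> pi / 2"
  shows "z * cos z \<le> sin z"
proof -
  have d: "((\<lambda>t. sin t - t * cos t) has_real_derivative t * sin t) (at t)" for t
  proof -
    show ?thesis by (rule derivative_eq_intros refl | simp)+
  qed
  have nn: "0 \<le> t * sin t" if "0 \<le> t" "t \<le> z" for t
    using assms that by (intro mult_nonneg_nonneg sin_ge_zero) auto
  have "sin 0 - 0 * cos 0 \<le> sin z - z * cos z"
    by (rule DERIV_nonneg_imp_nondecreasing[of 0 z "\<lambda>t. sin t - t * cos t"])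
       (use assms d nn in blast)+
  thus ?thesis by simp
qed

lemma cos_ge_quad: "1 - x^2 / 2 \<le> cos (x::real)"
proof -
  have "cos x = 1 - 2 * sin (x / 2) ^ 2" using cos_double_sin[of "x/2"] by simp
  moreover have "sin (x / 2) ^ 2 \<le> (x / 2) ^ 2"
  proof -
    have "\<bar>sin (x/2)\<bar> \<le> \<bar>x/2\<bar>" by (rule abs_sin_x_le_abs_x)
    hence "\<bar>sin (x/2)\<bar> ^ 2 \<le> \<bar>x/2\<bar> ^ 2" by (intro power_mono) auto
    thus ?thesis by (simp add: power_divide power2_abs)
  qed
  ultimately show ?thesis by (simp add: power_divide)
qed

lemma one_minus_x_sin_le:
  assumes "0 \<le> z" "z \<le> pi / 2"
  shows "(1 - z) * sin z \<le> z * cos z"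
proof (cases "z \<le> 1")
  case True
  have s: "sin z \<le> z" using sin_x_le_x assms by auto
  have s0: "0 \<le> sin z" using assms by (intro sin_ge_zero) auto
  have "(1 - z) * sin z \<le> (1 - z) * z" using True s by (intro mult_left_mono) auto
  also have "\<dots> \<le> z * (1 - z^2 / 2)"
  proof -
    have "z * z * z \<le> z * z * 1" using True assms by (intro mult_left_mono) auto
    moreover have "0 \<le> z * z" by simp
    ultimately have "z * z * z / 2 \<le> z * z" by linarith
    moreover have "(1 - z) * z = z - z * z" "z * (1 - z^2 / 2) = z - z * z * z / 2"
      by (simp_all add: algebra_simps power2_eq_square)
    ultimately show ?thesis by linarith
  qed
  also have "\<dots> \<le> z * cos z" using assms cos_ge_quad[of z] by (intro mult_left_mono) auto
  finally show ?thesis .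
next
  case False
  have "0 \<le> sin z" using assms by (intro sin_ge_zero) auto
  moreover have "0 \<le> cos z" using assms by (intro cos_ge_zero) auto
  ultimately have "(1 - z) * sin z \<le> 0" "0 \<le> z * cos z" using False assms
    by (auto intro: mult_nonpos_nonneg mult_nonneg_nonneg)
  thus ?thesis by linarith
qed

lemma cot_half_bounds:
  assumes "0 < z" "z \<le> pi / 2"
  shows "1 / z - 1 \<le> cot z" "cot z \<le> 1 / z"
proof -
  have sp: "sin z > 0" using assms pi_gt3 by (intro sin_gt_zero) auto
  have a: "z * cos z \<le> sin z" using x_cos_le_sin assms by auto
  have b: "(1 - z) * sin z \<le> z * cos z" using one_minus_x_sin_le assms by auto
  show "cot z \<le> 1 / z" unfolding cot_def using a sp assms by (simp add: field_simps)
  show "1 / z - 1 \<le> cot z" unfolding cot_def using b sp assms by (simp add: field_simps)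
qed

lemma cot_approx:
  assumes "0 < w" "w < 1"
  shows "\<bar>cot (pi * w) - 1 / (pi * w) + 1 / (pi * (1 - w))\<bar> \<le> 1"
proof (cases "w \<le> 1/2")
  case True
  have c: "1 / (pi * w) - 1 \<le> cot (pi * w)" "cot (pi * w) \<le> 1 / (pi * w)"
    using cot_half_bounds[of "pi * w"] assms True by auto
  have d: "0 \<le> 1 / (pi * (1 - w))" using assms by simp
  have e: "1 / (pi * (1 - w)) \<le> 1"
  proof -
    have "3 * (1/2) \<le> pi * (1 - w)" using True pi_gt3 assms by (intro mult_mono) auto
    hence "1 \<le> pi * (1 - w)" by simp
    thus ?thesis by simp
  qed
  show ?thesis using c d e by (intro abs_leI) linarith+
next
  case False
  define v where "v = 1 - w"
  have v: "0 < v" "v < 1/2" using assms False unfolding v_def by auto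
  have cw: "cot (pi * w) = - cot (pi * v)"
  proof -
    have "pi * w = pi - pi * v" unfolding v_def by (simp add: algebra_simps)
    thus ?thesis by (simp add: cot_def)
  qed
  have c: "1 / (pi * v) - 1 \<le> cot (pi * v)" "cot (pi * v) \<le> 1 / (pi * v)"
    using cot_half_bounds[of "pi * v"] v by auto
  have d: "0 \<le> 1 / (pi * w)" using assms by simp
  have e: "1 / (pi * w) \<le> 1"
  proof -
    have "3 * (1/2) \<le> pi * w" using False pi_gt3 by (intro mult_mono) auto
    hence "1 \<le> pi * w" by simp
    thus ?thesis by simp
  qed
  have wv: "1 - w = v" unfolding v_def by simp
  show ?thesis unfolding cw wv using c d e by (intro abs_leI) linarith+
qed

lemma ln_sin_shift:
  assumes w: "0 < w" "w < 1" and wh: "0 < w + h" "w + h < 1"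
  shows "ln (sin (pi * (w + h))) \<le> ln (sin (pi * w)) + pi * h * cot (pi * w) + \<bar>cot (pi * w)\<bar> * \<bar>pi * h\<bar> ^ 3 / 6"
proof -
  have s1: "sin (pi * w) > 0" using w by (intro sin_gt_zero) auto
  have s2: "sin (pi * (w + h)) > 0" using wh by (intro sin_gt_zero) auto
  define \<rho> where "\<rho> = sin (pi * (w + h)) / sin (pi * w)"
  have \<rho>pos: "\<rho> > 0" unfolding \<rho>_def using s1 s2 by simp
  have \<rho>eq: "\<rho> = cos (pi * h) + cot (pi * w) * sin (pi * h)"
  proof -
    have "sin (pi * (w + h)) = sin (pi * w) * cos (pi * h) + cos (pi * w) * sin (pi * h)"
      by (simp add: distrib_left sin_add)
    thus ?thesis unfolding \<rho>_def cot_def using s1 by (simp add: field_simps)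
  qed
  have lnsplit: "ln (sin (pi * (w + h))) = ln (sin (pi * w)) + ln \<rho>"
    unfolding \<rho>_def using s1 s2 by (simp add: ln_div)
  have "ln \<rho> \<le> \<rho> - 1" by (rule ln_le_minus_one[OF \<rho>pos])
  also have "\<dots> \<le> cot (pi * w) * sin (pi * h)" unfolding \<rho>eq using cos_le_one[of "pi * h"] by simp
  also have "\<dots> = pi * h * cot (pi * w) + cot (pi * w) * (sin (pi * h) - pi * h)"
    by (simp add: algebra_simps)
  also have "cot (pi * w) * (sin (pi * h) - pi * h) \<le> \<bar>cot (pi * w)\<bar> * \<bar>pi * h\<bar> ^ 3 / 6"
  proof -
    have "cot (pi * w) * (sin (pi * h) - pi * h) \<le> \<bar>cot (pi * w)\<bar> * \<bar>sin (pi * h) - pi * h\<bar>"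
      by (metis abs_ge_self abs_mult)
    also have "\<dots> \<le> \<bar>cot (pi * w)\<bar> * (\<bar>pi * h\<bar> ^ 3 / 6)"
      by (intro mult_left_mono sin_minus_x_bound) auto
    finally show ?thesis by simp
  qed
  finally show ?thesis unfolding lnsplit by simp
qed


lemma bij_mult_mod:
  fixes s q :: nat
  assumes q1: "q \<ge> 1" and cop: "coprime s q"
  shows "bij_betw (\<lambda>j. j * s mod q) {1..<q} {1..<q}"
proof -
  have ndvd: "\<not> q dvd j * s" if "j \<in> {1..<q}" for j
  proof
    assume "q dvd j * s"
    hence "q dvd j" using cop by (simp add: coprime_dvd_mult_left_iff coprime_commute)
    thus False using that by (auto dest: dvd_imp_le)
  qed
  have sub: "(\<lambda>j. j * s mod q) ` {1..<q} \<subseteq> {1..<q}"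
  proof
    fix r assume "r \<in> (\<lambda>j. j * s mod q) ` {1..<q}"
    then obtain j where j: "j \<in> {1..<q}" "r = j * s mod q" by auto
    have "r \<noteq> 0" using ndvd[OF j(1)] j(2) by (simp add: dvd_eq_mod_eq_0)
    moreover have "r < q" using j q1 by simp
    ultimately show "r \<in> {1..<q}" by simp
  qed
  have inj: "inj_on (\<lambda>j. j * s mod q) {1..<q}"
  proof (rule inj_onI)
    fix i j assume i: "i \<in> {1..<q}" and j: "j \<in> {1..<q}" and e: "i * s mod q = j * s mod q"
    have key: "a = b" if ab: "b \<le> a" "a \<in> {1..<q}" "b \<in> {1..<q}" "a * s mod q = b * s mod q" for a b
    proof -
      have "q dvd a * s - b * s" using ab by (simp add: mod_eq_dvd_iff_nat)
      hence "q dvd (a - b) * s" by (simp add: diff_mult_distrib)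
      hence "q dvd a - b" using cop by (simp add: coprime_dvd_mult_left_iff coprime_commute)
      moreover have "a - b < q" using ab by auto
      ultimately have "a - b = 0" by (metis dvd_imp_le neq0_conv not_le)
      thus ?thesis using ab by simp
    qed
    show "i = j"
    proof (cases "j \<le> i")
      case True thus ?thesis using key[of j i] i j e by simp
    next
      case False thus ?thesis using key[of i j] i j e by simp
    qed
  qed
  have "(\<lambda>j. j * s mod q) ` {1..<q} = {1..<q}" by (rule endo_inj_surj[OF _ sub inj]) simp
  thus ?thesis using inj unfolding bij_betw_def by simp
qed

lemma abs_sin_add_int_pi: "\<bar>sin (x + pi * of_int m)\<bar> = \<bar>sin x\<bar>"
  by (simp add: sin_add abs_mult)

lemma saw_uminus:
  assumes "y \<notin> \<int>"
  shows "saw (- y) = - saw y"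
proof -
  have a: "of_int \<lfloor>y\<rfloor> < y"
  proof -
    have "of_int \<lfloor>y\<rfloor> \<le> y" by (rule of_int_floor_le)
    moreover have "of_int \<lfloor>y\<rfloor> \<noteq> y" using assms by (metis Ints_of_int)
    ultimately show ?thesis by (rule order_le_neq_trans)
  qed
  have b: "y < of_int \<lfloor>y\<rfloor> + 1" by (rule real_of_int_floor_add_one_gt)
  have "\<lfloor>- y\<rfloor> = - \<lfloor>y\<rfloor> - 1"
    by (rule floor_unique) (insert a b, linarith)+
  thus ?thesis unfolding saw_def by simp
qed

lemma saw_frac_nat:
  fixes j s q :: nat
  assumes "q \<ge> 1"
  shows "saw (real j * (real s / real q)) = real (j * s mod q) / real q - 1/2"
proof -
  have "real j * (real s / real q) = real (j * s) / real q" by simp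
  moreover have "\<lfloor>real (j * s) / real q\<rfloor> = int (j * s div q)" by (rule floor_divide_of_nat_eq)
  moreover have "real (j * s) = real q * real (j * s div q) + real (j * s mod q)"
    by (metis div_mult_mod_eq of_nat_add of_nat_mult mult.commute)
  ultimately show ?thesis unfolding saw_def using assms by (simp add: field_simps)
qed

lemma not_int_frac:
  fixes j s q :: nat
  assumes "q \<ge> 1" "coprime s q" "j \<in> {1..<q}"
  shows "real j * (real s / real q) \<notin> \<int>"
proof
  assume "real j * (real s / real q) \<in> \<int>"
  then obtain k where k: "real j * (real s / real q) = of_int k" by (auto elim: Ints_cases)
  hence "real (j * s) = real q * of_int k" using assms by (simp add: field_simps)
  hence "int (j * s) = int q * k" by (metis of_int_eq_iff of_int_mult of_int_of_nat_eq)
  hence "int q dvd int (j * s)" by simp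
  hence "q dvd j * s" by presburger
  hence "q dvd j" using assms(2) by (simp add: coprime_dvd_mult_left_iff coprime_commute)
  thus False using assms(3) by (auto dest: dvd_imp_le)
qed

lemma sum_cot_zero:
  assumes "q \<ge> (1::nat)"
  shows "(\<Sum>j\<in>{1..<q}. cot (pi * real j / real q)) = 0"
proof -
  have b: "bij_betw (\<lambda>j. q - j) {1..<q} {1..<q}"
    by (rule bij_betwI[where g = "\<lambda>j. q - j"]) auto
  have "(\<Sum>j\<in>{1..<q}. cot (pi * real j / real q)) = (\<Sum>j\<in>{1..<q}. cot (pi * real (q - j) / real q))"
    by (rule sum.reindex_bij_betw[OF b, symmetric])
  also have "\<dots> = (\<Sum>j\<in>{1..<q}. - cot (pi * real j / real q))"
  proof (intro sum.cong refl)
    fix j assume j: "j \<in> {1..<q}"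
    have "pi * real (q - j) / real q = pi - pi * real j / real q"
      using j assms by (simp add: of_nat_diff field_simps)
    thus "cot (pi * real (q - j) / real q) = - cot (pi * real j / real q)"
      by (simp add: cot_def)
  qed
  also have "\<dots> = - (\<Sum>j\<in>{1..<q}. cot (pi * real j / real q))" by (simp add: sum_negf)
  finally show ?thesis by simp
qed

lemma sum_saw_reflect:
  fixes s q :: nat
  assumes q1: "q \<ge> 1" and cop: "coprime s q"
  shows "(\<Sum>j\<in>{1..<q}. saw (real j * (real s / real q)) / real (q - j)) = - Gs (real s / real q) (q - 1)"
proof -
  have b: "bij_betw (\<lambda>j. q - j) {1..<q} {1..<q}"
    by (rule bij_betwI[where g = "\<lambda>j. q - j"]) auto
  have "(\<Sum>j\<in>{1..<q}. saw (real j * (real s / real q)) / real (q - j)) =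
        (\<Sum>j\<in>{1..<q}. saw (real (q - j) * (real s / real q)) / real (q - (q - j)))"
    by (rule sum.reindex_bij_betw[OF b, symmetric])
  also have "\<dots> = (\<Sum>j\<in>{1..<q}. - (saw (real j * (real s / real q)) / real j))"
  proof (intro sum.cong refl)
    fix j assume j: "j \<in> {1..<q}"
    have eq: "real (q - j) * (real s / real q) = - (real j * (real s / real q)) + real s"
      using j q1 by (simp add: of_nat_diff field_simps)
    have "saw (real (q - j) * (real s / real q)) = saw (- (real j * (real s / real q)))"
      unfolding eq by (rule saw_add_nat)
    also have "\<dots> = - saw (real j * (real s / real q))"
      by (rule saw_uminus[OF not_int_frac[OF q1 cop j]])
    finally show "saw (real (q - j) * (real s / real q)) / real (q - (q - j)) = - (saw (real j * (real s / real q)) / real j)"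
      using j by simp
  qed
  also have "\<dots> = - Gs (real s / real q) (q - 1)"
  proof -
    have "{1..<q} = {1..q - 1}" using q1 by auto
    thus ?thesis unfolding Gs_def by (simp add: sum_negf)
  qed
  finally show ?thesis .
qed


lemma sin_rep:
  fixes q s j :: nat and p p' e :: int and \<alpha> \<tau> :: real
  assumes q1: "q \<ge> 1" and det: "int s * p - int q * p' = e" and e: "e = 1 \<or> e = -1"
    and th: "real q * \<alpha> - of_int p = - of_int e * \<tau>"
  shows "\<bar>sin (pi * real (j * s mod q) * \<alpha>)\<bar> = \<bar>sin (pi * (real j / real q - real (j * s mod q) * \<tau> / real q))\<bar>"
proof -
  define r where "r = j * s mod q"
  define D where "D = j * s div q"
  define m where "m = int j * p' - int D * p"
  have qpos: "real q > 0" using q1 by simp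
  have rD: "int r = int j * int s - int q * int D"
    unfolding r_def D_def by (metis add_diff_cancel_left' div_mult_mod_eq mult.commute of_nat_add of_nat_mult)
  have rp: "int r * p = e * int j + int q * m"
  proof -
    have "int r * p = int j * (int s * p) - int q * int D * p" unfolding rD by (simp add: algebra_simps)
    also have "int s * p = e + int q * p'" using det by simp
    finally show ?thesis unfolding m_def by (simp add: algebra_simps)
  qed
  have rp': "real r * of_int p = of_int e * real j + real q * of_int m"
    using arg_cong[OF rp, of "of_int :: int \<Rightarrow> real"] by simp
  have al: "\<alpha> = (of_int p - of_int e * \<tau>) / real q" using th qpos by (simp add: field_simps)
  have "pi * real r * \<alpha> = of_int e * (pi * (real j / real q - real r * \<tau> / real q)) + pi * of_int m"
  proof -
    have "pi * real r * \<alpha> = pi * (real r * of_int p) / real q - pi * of_int e * real r * \<tau> / real q"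
      unfolding al using qpos by (simp add: field_simps)
    also have "\<dots> = pi * (of_int e * real j + real q * of_int m) / real q - pi * of_int e * real r * \<tau> / real q"
      unfolding rp' ..
    also have "\<dots> = of_int e * (pi * (real j / real q - real r * \<tau> / real q)) + pi * of_int m"
      using qpos by (simp add: field_simps)
    finally show ?thesis .
  qed
  hence "\<bar>sin (pi * real r * \<alpha>)\<bar> = \<bar>sin (of_int e * (pi * (real j / real q - real r * \<tau> / real q)))\<bar>"
    using abs_sin_add_int_pi by simp
  also have "\<dots> = \<bar>sin (pi * (real j / real q - real r * \<tau> / real q))\<bar>"
    using e by auto
  finally show ?thesis unfolding r_def .
qed

lemma abs_aux_cot:
  fixes c a b m Q :: real
  assumes "\<bar>c - a + b\<bar> \<le> 1" "0 \<le> a" "a \<le> m" "0 \<le> b" "b \<le> m" "m \<le> Q"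
  shows "\<bar>c\<bar> \<le> Q + 1"
proof -
  have "c - a + b \<le> 1" "- (c - a + b) \<le> 1" using assms(1) by (auto dest: abs_le_D1 abs_le_D2)
  thus ?thesis using assms(2-) by (intro abs_leI) linarith+
qed

lemma sudler_core:
  fixes q s :: nat and p p' e :: int and \<alpha> \<tau> :: real
  assumes q1: "q \<ge> 1" and cop: "coprime s q" and det: "int s * p - int q * p' = e" and e: "e = 1 \<or> e = -1"
    and th: "real q * \<alpha> - of_int p = - of_int e * \<tau>" and \<tau>0: "0 < \<tau>" and \<tau>q: "real q * \<tau> < 1"
  shows "ln (sudler q \<alpha>) \<le> 20 + 2 * \<tau> * real q * \<bar>Gs (real s / real q) (q - 1)\<bar>"
proof -
  define f where "f r = \<bar>2 * sin (pi * real r * \<alpha>)\<bar>" for r :: nat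
  define rr where "rr j = j * s mod q" for j :: nat
  define G where "G = Gs (real s / real q) (q - 1)"
  define c where "c j = cot (pi * real j / real q)" for j :: nat
  define sw where "sw j = saw (real j * (real s / real q))" for j :: nat
  have qpos: "real q > 0" using q1 by simp
  have \<tau>1: "\<tau> < 1" using \<tau>q q1 \<tau>0 by (smt (verit) mult_le_cancel_right1 of_nat_1 of_nat_mono)
  have bij: "bij_betw rr {1..<q} {1..<q}" unfolding rr_def by (rule bij_mult_mod[OF q1 cop])
  have frep: "f (rr j) = 2 * sin (pi * (real j / real q + (- (real (rr j) * \<tau> / real q))))"
    and fpos: "0 < f (rr j)"
    and arg: "0 < real j / real q + (- (real (rr j) * \<tau> / real q))" "real j / real q + (- (real (rr j) * \<tau> / real q)) < 1"
    if j: "j \<in> {1..<q}" for j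
  proof -
    have rq: "rr j < q" unfolding rr_def using q1 by simp
    have r\<tau>: "real (rr j) * \<tau> < 1"
    proof -
      have "real (rr j) * \<tau> \<le> real q * \<tau>" using rq \<tau>0 by (intro mult_right_mono) auto
      thus ?thesis using \<tau>q by linarith
    qed
    have r\<tau>0: "0 \<le> real (rr j) * \<tau>" using \<tau>0 by simp
    have j1: "real j \<ge> 1" "real j < real q" using j by auto
    show a1: "0 < real j / real q + (- (real (rr j) * \<tau> / real q))"
      using r\<tau> j1 qpos by (simp add: field_simps)
    show a2: "real j / real q + (- (real (rr j) * \<tau> / real q)) < 1"
      using r\<tau>0 j1 qpos by (simp add: field_simps)
    have sp: "sin (pi * (real j / real q + (- (real (rr j) * \<tau> / real q)))) > 0"
      using a1 a2 by (intro sin_gt_zero) (auto simp: mult_less_cancel_left1)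
    have "f (rr j) = 2 * \<bar>sin (pi * (real j / real q - real (rr j) * \<tau> / real q))\<bar>"
      unfolding f_def rr_def using sin_rep[OF q1 det e th, of j] by (simp add: abs_mult)
    thus "f (rr j) = 2 * sin (pi * (real j / real q + (- (real (rr j) * \<tau> / real q))))"
      using sp by simp
    thus "0 < f (rr j)" using sp by simp
  qed
  have fq: "f q = 2 * sin (pi * \<tau>)" and fqpos: "0 < f q"
  proof -
    have "real q * \<alpha> = of_int p - of_int e * \<tau>" using th by simp
    hence "pi * (real q * \<alpha>) = pi * (of_int p - of_int e * \<tau>)" by simp
    hence "pi * real q * \<alpha> = - of_int e * (pi * \<tau>) + pi * of_int p" by (simp add: algebra_simps)
    hence "\<bar>sin (pi * real q * \<alpha>)\<bar> = \<bar>sin (- of_int e * (pi * \<tau>) + pi * of_int p)\<bar>" by (simp only:)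
    also have "\<dots> = \<bar>sin (- of_int e * (pi * \<tau>))\<bar>" by (rule abs_sin_add_int_pi)
    also have "\<dots> = \<bar>sin (pi * \<tau>)\<bar>" using e by auto
    also have "\<dots> = sin (pi * \<tau>)" using \<tau>0 \<tau>1 by (intro abs_of_pos sin_gt_zero) auto
    finally show "f q = 2 * sin (pi * \<tau>)" unfolding f_def by (simp add: abs_mult)
    thus "0 < f q" using \<tau>0 \<tau>1 by (simp add: sin_gt_zero)
  qed
  have lnfq: "ln (f q) \<le> ln (2 * pi * \<tau>)"
  proof -
    have "sin (pi * \<tau>) \<le> pi * \<tau>" using \<tau>0 by (intro sin_x_le_x) simp
    thus ?thesis unfolding fq using fqpos fq by (intro ln_mono) auto
  qed
  have set: "{1..q} = insert q {1..<q}" using q1 by auto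
  have lnP: "ln (sudler q \<alpha>) = ln (f q) + (\<Sum>j\<in>{1..<q}. ln (f (rr j)))"
  proof -
    have fpos_all: "0 < f r" if "r \<in> {1..<q}" for r
    proof -
      have "r \<in> rr ` {1..<q}" using bij that unfolding bij_betw_def by simp
      then obtain j where "j \<in> {1..<q}" "r = rr j" by blast
      thus ?thesis using fpos by simp
    qed
    have e1: "sudler q \<alpha> = f q * (\<Prod>r\<in>{1..<q}. f r)" unfolding sudler_def f_def set by simp
    have pp: "0 < (\<Prod>r\<in>{1..<q}. f r)"
      using fpos_all by (intro prod_pos) (auto intro: less_imp_le)
    have "ln (sudler q \<alpha>) = ln (f q) + ln (\<Prod>r\<in>{1..<q}. f r)"
      unfolding e1 by (rule ln_mult_pos[OF fqpos pp])
    also have "ln (\<Prod>r\<in>{1..<q}. f r) = (\<Sum>r\<in>{1..<q}. ln (f r))"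
      by (rule ln_prod) (use fpos_all in force)+
    also have "\<dots> = (\<Sum>j\<in>{1..<q}. ln (f (rr j)))"
      by (rule sum.reindex_bij_betw[OF bij, symmetric])
    finally show ?thesis .
  qed
  have cb: "\<bar>c j\<bar> \<le> real q + 1" if j: "j \<in> {1..<q}" for j
  proof -
    have w: "0 < real j / real q" "real j / real q < 1" using j by auto
    have ca: "\<bar>cot (pi * (real j / real q)) - 1 / (pi * (real j / real q)) + 1 / (pi * (1 - real j / real q))\<bar> \<le> 1"
      by (rule cot_approx[OF w])
    have t1: "1 / (pi * (real j / real q)) \<le> real q / pi"
      using j pi_gt_zero by (simp add: field_simps)
    have t2: "1 / (pi * (1 - real j / real q)) \<le> real q / pi"
    proof -
      have e: "1 / (pi * (1 - real j / real q)) = real q / (pi * real (q - j))"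
        using j qpos by (simp add: of_nat_diff field_simps)
      have "real q / (pi * real (q - j)) \<le> real q / (pi * 1)"
        using j pi_gt_zero by (intro divide_left_mono mult_left_mono mult_pos_pos) auto
      thus ?thesis unfolding e by simp
    qed
    have t0: "0 \<le> 1 / (pi * (real j / real q))" "0 \<le> 1 / (pi * (1 - real j / real q))" using w by auto
    have "real q / pi \<le> real q / 2" using pi_gt3 qpos by (intro divide_left_mono) auto
    moreover have "real q / 2 \<le> real q" by simp
    ultimately have "\<bar>cot (pi * (real j / real q))\<bar> \<le> real q + 1"
      using abs_aux_cot[OF ca t0(1) t1 t0(2) t2, of "real q"] by linarith
    thus ?thesis unfolding c_def by (metis times_divide_eq_right)
  qed
  have termb: "ln (f (rr j)) \<le> ln (2 * sin (pi * real j / real q)) - pi * \<tau> * (real (rr j) / real q) * c j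
                 + (real q + 1) * (pi * \<tau>) ^ 3 / 6" if j: "j \<in> {1..<q}" for j
  proof -
    have w: "0 < real j / real q" "real j / real q < 1" using j by auto
    have ls: "ln (sin (pi * (real j / real q + (- (real (rr j) * \<tau> / real q))))) \<le>
        ln (sin (pi * (real j / real q))) + pi * (- (real (rr j) * \<tau> / real q)) * cot (pi * (real j / real q))
        + \<bar>cot (pi * (real j / real q))\<bar> * \<bar>pi * (- (real (rr j) * \<tau> / real q))\<bar> ^ 3 / 6"
      by (rule ln_sin_shift[OF w arg[OF j]])
    have wa: "0 < pi * (real j / real q)" using w by (intro mult_pos_pos pi_gt_zero)
    have wb: "pi * (real j / real q) < pi"
      using mult_strict_left_mono[OF w(2) pi_gt_zero] by (simp only: mult_1_right)
    have sp: "sin (pi * (real j / real q)) > 0" by (rule sin_gt_zero[OF wa wb])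
    have sp2: "sin (pi * (real j / real q + (- (real (rr j) * \<tau> / real q)))) > 0"
      using fpos[OF j] frep[OF j] by simp
    have lf: "ln (f (rr j)) = ln 2 + ln (sin (pi * (real j / real q + (- (real (rr j) * \<tau> / real q)))))"
      unfolding frep[OF j] using sp2 by (simp add: ln_mult)
    have l2: "ln (2 * sin (pi * real j / real q)) = ln 2 + ln (sin (pi * (real j / real q)))"
      using sp by (simp add: ln_mult)
    have cube: "\<bar>cot (pi * (real j / real q))\<bar> * \<bar>pi * (- (real (rr j) * \<tau> / real q))\<bar> ^ 3 / 6 \<le> (real q + 1) * (pi * \<tau>) ^ 3 / 6"
    proof -
      have rq: "real (rr j) / real q \<le> 1" unfolding rr_def using qpos by simp
      have "\<bar>pi * (- (real (rr j) * \<tau> / real q))\<bar> = pi * \<tau> * (real (rr j) / real q)"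
        using \<tau>0 by (simp add: abs_mult)
      also have "\<dots> \<le> pi * \<tau>"
      proof -
        have "0 \<le> pi * \<tau>" using \<tau>0 by simp
        from mult_left_mono[OF rq this] show ?thesis by (simp only: mult_1_right)
      qed
      finally have "\<bar>pi * (- (real (rr j) * \<tau> / real q))\<bar> ^ 3 \<le> (pi * \<tau>) ^ 3"
        by (intro power_mono) auto
      moreover have "\<bar>cot (pi * (real j / real q))\<bar> \<le> real q + 1" using cb[OF j] unfolding c_def by simp
      ultimately show ?thesis by (intro divide_right_mono mult_mono) auto
    qed
    have lin: "pi * (- (real (rr j) * \<tau> / real q)) * cot (pi * (real j / real q)) = - (pi * \<tau> * (real (rr j) / real q) * c j)"
      unfolding c_def by simp
    show ?thesis using ls cube unfolding lf l2 lin by linarith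
  qed
  have sumln: "(\<Sum>j\<in>{1..<q}. ln (2 * sin (pi * real j / real q))) = ln (real q)"
  proof -
    have pos: "\<And>j. j \<in> {1..<q} \<Longrightarrow> 0 < 2 * sin (pi * real j / real q)"
      by (auto intro!: sin_gt_zero simp: field_simps)
    have "ln (\<Prod>j\<in>{1..<q}. 2 * sin (pi * real j / real q)) = (\<Sum>j\<in>{1..<q}. ln (2 * sin (pi * real j / real q)))"
      by (rule ln_prod) (use pos in force)+
    thus ?thesis using prod_sin[OF q1] by simp
  qed
  have rrsaw: "real (rr j) / real q = sw j + 1/2" for j
    unfolding rr_def sw_def using saw_frac_nat[OF q1] by simp
  have sumlin: "(\<Sum>j\<in>{1..<q}. pi * \<tau> * (real (rr j) / real q) * c j) = pi * \<tau> * (\<Sum>j\<in>{1..<q}. sw j * c j)"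
  proof -
    have "(\<Sum>j\<in>{1..<q}. pi * \<tau> * (real (rr j) / real q) * c j) = pi * \<tau> * ((\<Sum>j\<in>{1..<q}. sw j * c j) + 1/2 * (\<Sum>j\<in>{1..<q}. c j))"
      unfolding rrsaw by (simp add: sum_distrib_left sum.distrib algebra_simps)
    moreover have "(\<Sum>j\<in>{1..<q}. c j) = 0" unfolding c_def by (rule sum_cot_zero[OF q1])
    ultimately show ?thesis by simp
  qed
  have swb: "\<bar>sw j\<bar> \<le> 1/2" for j
  proof -
    have a: "sw j = real (j * s mod q) / real q - 1/2" unfolding sw_def by (rule saw_frac_nat[OF q1])
    have b: "real (j * s mod q) / real q < 1" using qpos q1 by simp
    have c: "0 \<le> real (j * s mod q) / real q" by simp
    show ?thesis unfolding a using b c by (intro abs_leI) linarith+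
  qed
  have sumsc: "\<bar>\<Sum>j\<in>{1..<q}. sw j * c j\<bar> \<le> 2 * real q / pi * \<bar>G\<bar> + real q / 2"
  proof -
    define b where "b j = c j - real q / (pi * real j) + real q / (pi * real (q - j))" for j
    have bb: "\<bar>b j\<bar> \<le> 1" if j: "j \<in> {1..<q}" for j
    proof -
      have w: "0 < real j / real q" "real j / real q < 1" using j by auto
      have e1: "1 / (pi * (real j / real q)) = real q / (pi * real j)" using qpos by simp
      have e2: "1 / (pi * (1 - real j / real q)) = real q / (pi * real (q - j))"
        using j qpos by (simp add: of_nat_diff field_simps)
      have e3: "cot (pi * (real j / real q)) = c j" unfolding c_def by simp
      show ?thesis using cot_approx[OF w] unfolding b_def e1 e2 e3 .
    qed
    have dec: "(\<Sum>j\<in>{1..<q}. sw j * c j) = real q / pi * (\<Sum>j\<in>{1..<q}. sw j / real j)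
               - real q / pi * (\<Sum>j\<in>{1..<q}. sw j / real (q - j)) + (\<Sum>j\<in>{1..<q}. sw j * b j)"
    proof -
      have "(\<Sum>j\<in>{1..<q}. sw j * c j) = (\<Sum>j\<in>{1..<q}. real q / pi * (sw j / real j) - real q / pi * (sw j / real (q - j)) + sw j * b j)"
        unfolding b_def by (intro sum.cong refl) (simp add: algebra_simps)
      thus ?thesis by (simp add: sum.distrib sum_subtractf sum_distrib_left)
    qed
    have g1: "(\<Sum>j\<in>{1..<q}. sw j / real j) = G"
    proof -
      have "{1..<q} = {1..q - 1}" using q1 by auto
      thus ?thesis unfolding G_def Gs_def sw_def by simp
    qed
    have g2: "(\<Sum>j\<in>{1..<q}. sw j / real (q - j)) = - G"
      unfolding G_def sw_def by (rule sum_saw_reflect[OF q1 cop])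
    have g3: "\<bar>\<Sum>j\<in>{1..<q}. sw j * b j\<bar> \<le> real q / 2"
    proof -
      have "\<bar>\<Sum>j\<in>{1..<q}. sw j * b j\<bar> \<le> (\<Sum>j\<in>{1..<q}. \<bar>sw j * b j\<bar>)" by (rule sum_abs)
      also have "\<dots> \<le> (\<Sum>j\<in>{1..<q}. 1/2)"
      proof (intro sum_mono)
        fix j assume j: "j \<in> {1..<q}"
        have "\<bar>sw j * b j\<bar> = \<bar>sw j\<bar> * \<bar>b j\<bar>" by (simp add: abs_mult)
        also have "\<dots> \<le> 1/2 * 1" using swb bb[OF j] by (intro mult_mono) auto
        finally show "\<bar>sw j * b j\<bar> \<le> 1/2" by simp
      qed
      also have "\<dots> \<le> real q / 2" using q1 by simp
      finally show ?thesis .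
    qed
    have "\<bar>\<Sum>j\<in>{1..<q}. sw j * c j\<bar> = \<bar>2 * (real q / pi) * G + (\<Sum>j\<in>{1..<q}. sw j * b j)\<bar>"
      unfolding dec g1 g2 by (simp add: algebra_simps)
    also have "\<dots> \<le> \<bar>2 * (real q / pi) * G\<bar> + \<bar>\<Sum>j\<in>{1..<q}. sw j * b j\<bar>" by (rule abs_triangle_ineq)
    also have "\<bar>2 * (real q / pi) * G\<bar> = 2 * real q / pi * \<bar>G\<bar>" using qpos by (simp add: abs_mult)
    finally show ?thesis using g3 by linarith
  qed
  have sumcube: "(\<Sum>j\<in>{1..<q}. (real q + 1) * (pi * \<tau>) ^ 3 / 6) \<le> 11"
  proof -
    have "(\<Sum>j\<in>{1..<q}. (real q + 1) * (pi * \<tau>) ^ 3 / 6) = real (q - 1) * (real q + 1) * (pi * \<tau>) ^ 3 / 6"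
      by simp
    also have "real (q - 1) * (real q + 1) \<le> real q * real q" using q1 by (simp add: of_nat_diff algebra_simps)
    hence "real (q - 1) * (real q + 1) * (pi * \<tau>) ^ 3 / 6 \<le> real q * real q * (pi * \<tau>) ^ 3 / 6"
      using \<tau>0 by (intro divide_right_mono mult_right_mono) auto
    also have "real q * real q * (pi * \<tau>) ^ 3 / 6 = (real q * \<tau>) ^ 2 * \<tau> * pi ^ 3 / 6"
      by (simp add: power2_eq_square power3_eq_cube algebra_simps)
    also have "\<dots> \<le> 1 * 1 * 4 ^ 3 / 6"
    proof -
      have "(real q * \<tau>) ^ 2 \<le> 1" using \<tau>q \<tau>0 qpos by (simp add: power_le_one)
      moreover have "pi ^ 3 \<le> 4 ^ 3" using pi_less_4 by (intro power_mono) auto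
      ultimately show ?thesis using \<tau>1 \<tau>0 by (intro divide_right_mono mult_mono) auto
    qed
    finally show ?thesis by (simp add: mult_ac)
  qed
  have main: "(\<Sum>j\<in>{1..<q}. ln (f (rr j))) \<le> ln (real q) - pi * \<tau> * (\<Sum>j\<in>{1..<q}. sw j * c j) + 11"
  proof -
    have "(\<Sum>j\<in>{1..<q}. ln (f (rr j))) \<le> (\<Sum>j\<in>{1..<q}. ln (2 * sin (pi * real j / real q)) - pi * \<tau> * (real (rr j) / real q) * c j
                 + (real q + 1) * (pi * \<tau>) ^ 3 / 6)"
      by (intro sum_mono termb)
    also have "\<dots> = ln (real q) - pi * \<tau> * (\<Sum>j\<in>{1..<q}. sw j * c j) + (\<Sum>j\<in>{1..<q}. (real q + 1) * (pi * \<tau>) ^ 3 / 6)"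
      unfolding sum.distrib sum_subtractf sumln sumlin ..
    finally show ?thesis using sumcube by linarith
  qed
  have linb: "- (pi * \<tau> * (\<Sum>j\<in>{1..<q}. sw j * c j)) \<le> 2 * \<tau> * real q * \<bar>G\<bar> + 2"
  proof -
    have "- (pi * \<tau> * (\<Sum>j\<in>{1..<q}. sw j * c j)) \<le> pi * \<tau> * \<bar>\<Sum>j\<in>{1..<q}. sw j * c j\<bar>"
      using \<tau>0 by (simp add: abs_mult[symmetric]) (metis abs_ge_minus_self abs_mult abs_of_pos pi_gt_zero mult_pos_pos \<tau>0)
    also have "\<dots> \<le> pi * \<tau> * (2 * real q / pi * \<bar>G\<bar> + real q / 2)"
      using sumsc \<tau>0 by (intro mult_left_mono) auto
    also have "\<dots> = 2 * \<tau> * real q * \<bar>G\<bar> + pi * (real q * \<tau>) / 2" by (simp add: field_simps)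
    also have "pi * (real q * \<tau>) / 2 \<le> 4 * 1 / 2"
      using pi_less_4 \<tau>q \<tau>0 qpos by (intro divide_right_mono mult_mono) auto
    finally show ?thesis by simp
  qed
  have l2pi: "ln (2 * pi * \<tau>) + ln (real q) \<le> 7"
  proof -
    have "ln (2 * pi * \<tau>) + ln (real q) = ln (2 * pi * (real q * \<tau>))"
      using \<tau>0 qpos by (simp add: ln_mult algebra_simps)
    also have "\<dots> \<le> 2 * pi * (real q * \<tau>) - 1" using \<tau>0 qpos by (intro ln_le_minus_one) simp
    also have "\<dots> \<le> 2 * 4 * 1 - 1" using pi_less_4 \<tau>q \<tau>0 qpos by (intro diff_right_mono mult_mono) auto
    finally show ?thesis by simp
  qed
  show ?thesis unfolding lnP G_def[symmetric] using lnfq main linb l2pi by linarith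
qed


definition xs :: "real \<Rightarrow> nat \<Rightarrow> real" where
  "xs \<alpha> k = (gauss_map ^^ k) \<alpha>"

fun cf_num :: "real \<Rightarrow> nat \<Rightarrow> nat" where
  "cf_num \<alpha> 0 = 0"
| "cf_num \<alpha> (Suc 0) = 1"
| "cf_num \<alpha> (Suc (Suc n)) = cf_digit \<alpha> (n + 2) * cf_num \<alpha> (Suc n) + cf_num \<alpha> n"

definition cf_theta :: "real \<Rightarrow> nat \<Rightarrow> real" where
  "cf_theta \<alpha> n = real (cf_denom \<alpha> n) * \<alpha> - real (cf_num \<alpha> n)"

lemma xs_Suc: "xs \<alpha> (Suc k) = frac (1 / xs \<alpha> k)"
  unfolding xs_def gauss_map_def by simp

lemma xs_0: "xs \<alpha> 0 = \<alpha>" unfolding xs_def by simp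

lemma xs_props:
  assumes "0 < \<alpha>" "\<alpha> < 1" "\<alpha> \<notin> \<rat>"
  shows "0 < xs \<alpha> k \<and> xs \<alpha> k < 1 \<and> xs \<alpha> k \<notin> \<rat>"
proof (induction k)
  case 0
  then show ?case using assms by (simp add: xs_0)
next
  case (Suc k)
  define x where "x = xs \<alpha> k"
  have x: "0 < x" "x < 1" "x \<notin> \<rat>" using Suc unfolding x_def by auto
  have ir: "1 / x \<notin> \<rat>"
  proof
    assume "1 / x \<in> \<rat>"
    hence "1 / (1 / x) \<in> \<rat>" by (rule Rats_divide[OF Rats_1])
    thus False using x by simp
  qed
  have fr: "frac (1 / x) \<notin> \<rat>"
  proof
    assume "frac (1 / x) \<in> \<rat>"
    hence "frac (1 / x) + of_int \<lfloor>1 / x\<rfloor> \<in> \<rat>" by (intro Rats_add) auto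
    moreover have "1 / x = frac (1 / x) + of_int \<lfloor>1 / x\<rfloor>" by (simp add: frac_def)
    ultimately show False using ir by simp
  qed
  have "frac (1 / x) \<noteq> 0"
  proof
    assume "frac (1 / x) = 0"
    hence "frac (1 / x) \<in> \<rat>" by (simp only: Rats_0)
    thus False using fr by blast
  qed
  hence "0 < frac (1 / x)" using frac_ge_0[of "1 / x"] by linarith
  thus ?case using fr frac_lt_1 unfolding xs_Suc x_def[symmetric] by auto
qed

lemma cf_digit_Suc:
  assumes "0 < \<alpha>" "\<alpha> < 1" "\<alpha> \<notin> \<rat>"
  shows "real (cf_digit \<alpha> (Suc k)) = 1 / xs \<alpha> k - xs \<alpha> (Suc k)" "cf_digit \<alpha> (Suc k) \<ge> 1"
proof -
  have x: "0 < xs \<alpha> k" "xs \<alpha> k < 1" using xs_props[OF assms] by auto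
  have g1: "1 < 1 / xs \<alpha> k" using x by simp
  hence f1: "\<lfloor>1 / xs \<alpha> k\<rfloor> \<ge> 1" by (simp add: le_floor_iff)
  have d: "cf_digit \<alpha> (Suc k) = nat \<lfloor>1 / xs \<alpha> k\<rfloor>" unfolding cf_digit_def xs_def by simp
  have nn: "real (nat \<lfloor>1 / xs \<alpha> k\<rfloor>) = of_int \<lfloor>1 / xs \<alpha> k\<rfloor>"
    by (rule of_nat_nat) (use f1 in linarith)
  show "real (cf_digit \<alpha> (Suc k)) = 1 / xs \<alpha> k - xs \<alpha> (Suc k)"
    unfolding d xs_Suc frac_def nn by simp
  have "nat 1 \<le> nat \<lfloor>1 / xs \<alpha> k\<rfloor>" using f1 by (rule nat_mono)
  thus "cf_digit \<alpha> (Suc k) \<ge> 1" unfolding d by simp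
qed

fun cf_Phi :: "real \<Rightarrow> nat \<Rightarrow> real" where
  "cf_Phi \<alpha> 0 = 0"
| "cf_Phi \<alpha> (Suc m) = real (cf_denom \<alpha> m) / real (cf_denom \<alpha> (Suc m)) * cf_Phi \<alpha> m
     + 14 + ln (real (cf_denom \<alpha> (Suc m)) / real (cf_denom \<alpha> m))"

context
  fixes \<alpha> :: real
  assumes \<alpha>0: "0 < \<alpha>" and \<alpha>1: "\<alpha> < 1" and \<alpha>Q: "\<alpha> \<notin> \<rat>"
begin

private abbreviation "q \<equiv> cf_denom \<alpha>"
private abbreviation "p \<equiv> cf_num \<alpha>"
private abbreviation "a \<equiv> cf_digit \<alpha>"
private abbreviation "x \<equiv> xs \<alpha>"

lemma dig_eq: "real (a (Suc k)) = 1 / x k - x (Suc k)" and dig_ge1: "a (Suc k) \<ge> 1"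
  using cf_digit_Suc[OF \<alpha>0 \<alpha>1 \<alpha>Q] by auto

lemma x_pos: "0 < x k" and x_lt1: "x k < 1"
  using xs_props[OF \<alpha>0 \<alpha>1 \<alpha>Q] by auto

lemma theta_closed: "cf_theta \<alpha> n = (-1) ^ n * (\<Prod>k\<le>n. x k)"
proof -
  have "cf_theta \<alpha> n = (-1) ^ n * (\<Prod>k\<le>n. x k) \<and> cf_theta \<alpha> (Suc n) = (-1) ^ Suc n * (\<Prod>k\<le>Suc n. x k)"
  proof (induction n)
    case 0
    have "cf_theta \<alpha> 0 = \<alpha>" unfolding cf_theta_def by simp
    moreover have "cf_theta \<alpha> 1 = real (a 1) * \<alpha> - 1" unfolding cf_theta_def by simp
    moreover have "real (a 1) * \<alpha> - 1 = - (x 0 * x 1)"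
      using dig_eq[of 0] \<alpha>0 by (simp add: xs_0 field_simps)
    ultimately show ?case by (simp add: xs_0)
  next
    case (Suc n)
    have rec: "cf_theta \<alpha> (Suc (Suc n)) = real (a (Suc (Suc n))) * cf_theta \<alpha> (Suc n) + cf_theta \<alpha> n"
      unfolding cf_theta_def by (simp add: algebra_simps)
    have xe: "real (a (Suc (Suc n))) * x (Suc n) = 1 - x (Suc n) * x (Suc (Suc n))"
      using dig_eq[of "Suc n"] x_pos[of "Suc n"] by (simp add: field_simps)
    have "cf_theta \<alpha> (Suc (Suc n)) = (-1) ^ n * (\<Prod>k\<le>n. x k) * (1 - real (a (Suc (Suc n))) * x (Suc n))"
      unfolding rec using Suc.IH by (simp add: algebra_simps)
    also have "\<dots> = (-1) ^ Suc (Suc n) * (\<Prod>k\<le>Suc (Suc n). x k)"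
      unfolding xe by (simp add: algebra_simps)
    finally show ?case using Suc.IH by simp
  qed
  thus ?thesis by simp
qed

lemma prod_x_pos: "0 < (\<Prod>k\<le>n. x k)"
  using x_pos by (intro prod_pos) (auto intro: less_imp_le)

lemma det: "int (q n) * int (p (Suc n)) - int (q (Suc n)) * int (p n) = (-1) ^ n"
proof (induction n)
  case 0
  then show ?case by simp
next
  case (Suc n)
  have "int (q (Suc n)) * int (p (Suc (Suc n))) - int (q (Suc (Suc n))) * int (p (Suc n))
        = - (int (q n) * int (p (Suc n)) - int (q (Suc n)) * int (p n))"
    by (simp add: algebra_simps)
  then show ?case using Suc by simp
qed

lemma q_ge1: "q n \<ge> 1"
proof -
  have "q n \<ge> 1 \<and> q (Suc n) \<ge> 1"
  proof (induction n)
    case 0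
    then show ?case using dig_ge1[of 0] by simp
  next
    case (Suc n)
    then show ?case by simp
  qed
  thus ?thesis by simp
qed

lemma q_Suc_ge: "q (Suc n) \<ge> a (Suc n) * q n"
proof (cases n)
  case 0
  then show ?thesis by simp
next
  case (Suc m)
  then show ?thesis by (simp add: add_2_eq_Suc')
qed

lemma q_mono_Suc: "q n \<le> q (Suc n)"
  using q_Suc_ge[of n] dig_ge1[of n] by (metis le_trans mult_le_mono1 mult_1)

lemma q_Suc_le: "q (Suc n) \<le> (a (Suc n) + 1) * q n"
proof (cases n)
  case 0
  then show ?thesis by simp
next
  case (Suc m)
  have "q (Suc (Suc m)) = a (Suc (Suc m)) * q (Suc m) + q m" by (simp add: add_2_eq_Suc')
  moreover have "q m \<le> q (Suc m)" by (rule q_mono_Suc)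
  ultimately show ?thesis using Suc by simp
qed

lemma q_SucSuc_ge: "q (Suc (Suc n)) \<ge> q (Suc n) + q n"
proof -
  have "q (Suc (Suc n)) = a (Suc (Suc n)) * q (Suc n) + q n" by (simp add: add_2_eq_Suc')
  moreover have "a (Suc (Suc n)) * q (Suc n) \<ge> q (Suc n)" using dig_ge1[of "Suc n"] by simp
  ultimately show ?thesis by simp
qed

lemma coprime_q: "coprime (q n) (q (Suc n))"
proof -
  have "coprime (int (q n)) (int (q (Suc n)))"
  proof (rule coprimeI)
    fix d assume d1: "d dvd int (q n)" and d2: "d dvd int (q (Suc n))"
    have "d dvd int (q n) * int (p (Suc n)) - int (q (Suc n)) * int (p n)"
      using d1 d2 by (intro dvd_diff dvd_mult2)
    hence "d dvd (-1) ^ n" using det[of n] by simp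
    moreover have "is_unit ((-1::int) ^ n)" by simp
    ultimately show "is_unit d" by (rule dvd_unit_imp_unit)
  qed
  thus ?thesis by simp
qed

lemma theta_abs: "\<bar>cf_theta \<alpha> n\<bar> = (\<Prod>k\<le>n. x k)"
  using theta_closed[of n] prod_x_pos[of n] by (simp add: abs_mult)

lemma theta_bound: "real (q (Suc n)) * \<bar>cf_theta \<alpha> n\<bar> < 1"
proof -
  define T where "T m = (\<Prod>k\<le>m. x k)" for m
  have Tpos: "0 < T m" for m unfolding T_def by (rule prod_x_pos)
  have id: "real (q (Suc n)) * cf_theta \<alpha> n - real (q n) * cf_theta \<alpha> (Suc n) = (-1) ^ n"
  proof -
    have "real (q (Suc n)) * cf_theta \<alpha> n - real (q n) * cf_theta \<alpha> (Suc n)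
          = real_of_int (int (q n) * int (p (Suc n)) - int (q (Suc n)) * int (p n))"
      unfolding cf_theta_def by (simp add: algebra_simps)
    also have "\<dots> = (-1) ^ n" unfolding det by simp
    finally show ?thesis .
  qed
  have "(-1) ^ n * (real (q (Suc n)) * T n + real (q n) * T (Suc n)) = (-1) ^ n"
    using id unfolding theta_closed T_def[symmetric] by (simp add: algebra_simps)
  hence e: "real (q (Suc n)) * T n + real (q n) * T (Suc n) = 1"
    by (metis mult_cancel_left1 mult_cancel_left2 power_minus1_even neg_one_even_power neg_one_odd_power minus_mult_minus mult_minus_left mult_1)
  have "0 < real (q n) * T (Suc n)" using q_ge1[of n] Tpos[of "Suc n"] by simp
  hence "real (q (Suc n)) * T n < 1" using e by linarith
  thus ?thesis unfolding theta_abs T_def .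
qed


lemmas cf_facts = q_ge1 q_mono_Suc coprime_q
  dig_ge1 q_Suc_le q_Suc_ge q_SucSuc_ge

lemma Gs_cf_bound: "N < q (Suc m) \<Longrightarrow> \<bar>Gs (real (q m) / real (q (Suc m))) N\<bar> \<le> cf_Phi \<alpha> (Suc m)"
proof (induction m arbitrary: N)
  case 0
  have q0: "q 0 = 1" by simp
  have "\<bar>Gs (real 1 / real (q 1)) N + (real 1 / real (q 1)) * Gs (real 0 / real 1) (N * 1 div q 1)\<bar>
        \<le> 14 + ln (real (q 1) / real 1)"
    by (rule saw_rec[where a = "q 1"]) (use 0 cf_facts(1)[of 1] in auto)
  moreover have "N * 1 div q 1 = 0" using 0 by simp
  ultimately show ?case by (simp add: Gs_def)
next
  case (Suc m)
  define s where "s = q (Suc m)"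
  define Q where "Q = q (Suc (Suc m))"
  define K where "K = N * s div Q"
  have s1: "s \<ge> 1" unfolding s_def by (rule cf_facts(1))
  have sQ: "s \<le> Q" unfolding s_def Q_def by (rule cf_facts(2))
  have cop: "coprime s Q" unfolding s_def Q_def by (rule cf_facts(3))
  have Qe: "Q = a (Suc (Suc m)) * s + q m" unfolding Q_def s_def by (simp add: add_2_eq_Suc')
  have NQ: "N < Q" using Suc.prems unfolding Q_def .
  have Qpos: "Q > 0" using NQ by simp
  have Ks: "K < s" unfolding K_def using NQ Qpos s1 by (simp add: div_less_iff_less_mult)
  have IH: "\<bar>Gs (real (q m) / real s) K\<bar> \<le> cf_Phi \<alpha> (Suc m)" unfolding s_def by (rule Suc.IH) (use Ks s_def in simp)
  have R: "\<bar>Gs (real s / real Q) N + (real s / real Q) * Gs (real (q m) / real s) K\<bar> \<le> 14 + ln (real Q / real s)"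
    unfolding K_def by (rule saw_rec[OF s1 cop Qe NQ sQ])
  have "\<bar>Gs (real s / real Q) N\<bar> \<le> \<bar>Gs (real s / real Q) N + (real s / real Q) * Gs (real (q m) / real s) K\<bar>
        + \<bar>(real s / real Q) * Gs (real (q m) / real s) K\<bar>"
    using abs_triangle_ineq4[of "Gs (real s / real Q) N + (real s / real Q) * Gs (real (q m) / real s) K"
                                "(real s / real Q) * Gs (real (q m) / real s) K"] by simp
  also have "\<bar>(real s / real Q) * Gs (real (q m) / real s) K\<bar> \<le> (real s / real Q) * cf_Phi \<alpha> (Suc m)"
  proof -
    have nn: "0 \<le> real s / real Q" by simp
    have "\<bar>(real s / real Q) * Gs (real (q m) / real s) K\<bar> = (real s / real Q) * \<bar>Gs (real (q m) / real s) K\<bar>"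
      by (simp add: abs_mult)
    also have "\<dots> \<le> (real s / real Q) * cf_Phi \<alpha> (Suc m)" by (rule mult_left_mono[OF IH nn])
    finally show ?thesis .
  qed
  finally have "\<bar>Gs (real s / real Q) N\<bar> \<le> (real s / real Q) * cf_Phi \<alpha> (Suc m) + 14 + ln (real Q / real s)"
    using R by linarith
  thus ?case unfolding s_def Q_def by simp
qed

lemma Phi_W: "real (q m) * cf_Phi \<alpha> m \<le> 15 * (\<Sum>i\<in>{1..m}. real (q i) * real (a i))"
proof (induction m)
  case 0
  then show ?case by simp
next
  case (Suc m)
  have qm: "real (q m) \<ge> 1" using cf_facts(1)[of m] by simp
  have qs: "real (q (Suc m)) \<ge> 1" using cf_facts(1)[of "Suc m"] by simp
  have a1: "real (a (Suc m)) \<ge> 1" using cf_facts(4)[of m] by simp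
  have le: "real (q (Suc m)) \<le> (real (a (Suc m)) + 1) * real (q m)"
    using cf_facts(5)[of m] by (metis of_nat_1 of_nat_add of_nat_le_iff of_nat_mult)
  have L: "ln (real (q (Suc m)) / real (q m)) \<le> real (a (Suc m))"
  proof -
    have "ln (real (q (Suc m)) / real (q m)) \<le> real (q (Suc m)) / real (q m) - 1"
      using qm qs by (intro ln_le_minus_one) simp
    also have "real (q (Suc m)) / real (q m) \<le> real (a (Suc m)) + 1"
      using le qm by (simp add: divide_le_eq)
    finally show ?thesis by simp
  qed
  have eq: "real (q (Suc m)) * cf_Phi \<alpha> (Suc m) = real (q m) * cf_Phi \<alpha> m
          + real (q (Suc m)) * (14 + ln (real (q (Suc m)) / real (q m)))"
    using qs by (simp add: field_simps)
  have X: "real (q (Suc m)) * (14 + ln (real (q (Suc m)) / real (q m))) \<le> 15 * (real (q (Suc m)) * real (a (Suc m)))"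
  proof -
    have "real (q (Suc m)) * (14 + ln (real (q (Suc m)) / real (q m))) \<le> real (q (Suc m)) * (15 * real (a (Suc m)))"
      using L a1 qs by (intro mult_left_mono) auto
    also have "\<dots> = 15 * (real (q (Suc m)) * real (a (Suc m)))" by (rule mult.left_commute)
    finally show ?thesis .
  qed
  have S: "(\<Sum>i\<in>{1..Suc m}. real (q i) * real (a i)) = (\<Sum>i\<in>{1..m}. real (q i) * real (a i)) + real (q (Suc m)) * real (a (Suc m))"
    by simp
  show ?case unfolding eq S using add_mono[OF Suc.IH X] by (simp only: distrib_left)
qed

lemma sum_q_le: "(\<Sum>i\<le>m. real (q i)) \<le> real (q m) + real (q (Suc m))"
proof (induction m)
  case 0
  then show ?case by simp
next
  case (Suc m)
  have "real (q (Suc m) + q m) \<le> real (q (Suc (Suc m)))" using cf_facts(7)[of m] by (rule of_nat_mono)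
  hence "real (q (Suc m)) + real (q m) \<le> real (q (Suc (Suc m)))" by (simp only: of_nat_add)
  then show ?case using Suc by simp
qed

lemma sum_q_le3: "(\<Sum>i\<in>{1..Suc m}. real (q i)) \<le> 3 * real (q (Suc m))"
proof -
  have "(\<Sum>i\<in>{1..Suc m}. real (q i)) \<le> (\<Sum>i\<le>Suc m. real (q i))"
    by (intro sum_mono2) auto
  also have "\<dots> = (\<Sum>i\<le>m. real (q i)) + real (q (Suc m))" by simp
  also have "\<dots> \<le> real (q m) + 2 * real (q (Suc m))" using sum_q_le[of m] by simp
  also have "\<dots> \<le> 3 * real (q (Suc m))" using cf_facts(2)[of m] by simp
  finally show ?thesis .
qed

lemma ln_sudler_bound:
  assumes M: "\<And>i. i \<in> {1..Suc m} \<Longrightarrow> real (a i) \<le> M * real (a (Suc (Suc m)))" and M0: "M \<ge> 0"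
  shows "ln (sudler (q (Suc m)) \<alpha>) \<le> 20 + 90 * M"
proof -
  define \<tau> where "\<tau> = \<bar>cf_theta \<alpha> (Suc m)\<bar>"
  define e :: int where "e = (-1) ^ m"
  have \<tau>eq: "\<tau> = (\<Prod>k\<le>Suc m. xs \<alpha> k)" unfolding \<tau>_def by (rule theta_abs)
  have \<tau>0: "0 < \<tau>" unfolding \<tau>eq by (rule prod_x_pos)
  have \<tau>b: "real (q (Suc (Suc m))) * \<tau> < 1" unfolding \<tau>_def by (rule theta_bound)
  have \<tau>q: "real (q (Suc m)) * \<tau> < 1"
  proof -
    have "real (q (Suc m)) \<le> real (q (Suc (Suc m)))" using cf_facts(2)[of "Suc m"] by (rule of_nat_mono)
    hence "real (q (Suc m)) * \<tau> \<le> real (q (Suc (Suc m))) * \<tau>" using \<tau>0 by (intro mult_right_mono) auto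
    thus ?thesis using \<tau>b by linarith
  qed
  have det': "int (q m) * int (p (Suc m)) - int (q (Suc m)) * int (p m) = e"
    unfolding e_def by (rule det)
  have e: "e = 1 \<or> e = -1" unfolding e_def by (simp add: minus_one_power_iff)
  have th: "real (q (Suc m)) * \<alpha> - of_int (int (p (Suc m))) = - of_int e * \<tau>"
  proof -
    have "real (q (Suc m)) * \<alpha> - of_int (int (p (Suc m))) = cf_theta \<alpha> (Suc m)" unfolding cf_theta_def by simp
    also have "\<dots> = (-1) ^ Suc m * (\<Prod>k\<le>Suc m. xs \<alpha> k)" by (rule theta_closed)
    also have "\<dots> = - of_int e * \<tau>" unfolding \<tau>eq e_def by simp
    finally show ?thesis .
  qed
  have core: "ln (sudler (q (Suc m)) \<alpha>) \<le> 20 + 2 * \<tau> * real (q (Suc m)) * \<bar>Gs (real (q m) / real (q (Suc m))) (q (Suc m) - 1)\<bar>"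
    by (rule sudler_core[OF cf_facts(1) cf_facts(3) det' e th \<tau>0 \<tau>q])
  have G: "\<bar>Gs (real (q m) / real (q (Suc m))) (q (Suc m) - 1)\<bar> \<le> cf_Phi \<alpha> (Suc m)"
    by (rule Gs_cf_bound) (use cf_facts(1)[of "Suc m"] in simp)
  have W: "real (q (Suc m)) * cf_Phi \<alpha> (Suc m) \<le> 15 * (\<Sum>i\<in>{1..Suc m}. real (q i) * real (a i))"
    by (rule Phi_W)
  have W2: "(\<Sum>i\<in>{1..Suc m}. real (q i) * real (a i)) \<le> 3 * M * real (q (Suc (Suc m)))"
  proof -
    have "(\<Sum>i\<in>{1..Suc m}. real (q i) * real (a i)) \<le> (\<Sum>i\<in>{1..Suc m}. real (q i) * (M * real (a (Suc (Suc m)))))"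
      by (intro sum_mono mult_left_mono M) auto
    also have "\<dots> = (\<Sum>i\<in>{1..Suc m}. real (q i)) * (M * real (a (Suc (Suc m))))"
      by (rule sum_distrib_right[symmetric])
    also have "\<dots> \<le> (3 * real (q (Suc m))) * (M * real (a (Suc (Suc m))))"
      using sum_q_le3[of m] M0 by (intro mult_right_mono) auto
    also have "\<dots> = 3 * M * (real (a (Suc (Suc m))) * real (q (Suc m)))" by (simp add: mult_ac)
    also have "\<dots> \<le> 3 * M * real (q (Suc (Suc m)))"
    proof -
      have "a (Suc (Suc m)) * q (Suc m) \<le> q (Suc (Suc m))" by (rule cf_facts(6))
      hence "real (a (Suc (Suc m))) * real (q (Suc m)) \<le> real (q (Suc (Suc m)))"
        by (metis of_nat_le_iff of_nat_mult)
      thus ?thesis using M0 by (intro mult_left_mono) auto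
    qed
    finally show ?thesis .
  qed
  have "2 * \<tau> * real (q (Suc m)) * \<bar>Gs (real (q m) / real (q (Suc m))) (q (Suc m) - 1)\<bar>
        \<le> 2 * \<tau> * (real (q (Suc m)) * cf_Phi \<alpha> (Suc m))"
    using G \<tau>0 by (simp add: mult_left_mono)
  also have "\<dots> \<le> 2 * \<tau> * (15 * (3 * M * real (q (Suc (Suc m)))))"
    using W W2 \<tau>0 by (intro mult_left_mono) auto
  also have "\<dots> = 90 * M * (real (q (Suc (Suc m))) * \<tau>)" by (simp add: mult_ac)
  also have "\<dots> \<le> 90 * M * 1" using \<tau>b M0 by (intro mult_left_mono) auto
  finally show ?thesis using core by simp
qed

lemma good_indices: "\<exists>M::nat. infinite {m. \<forall>i\<in>{1..Suc m}. a i \<le> M * a (Suc (Suc m))}"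
proof (cases "\<exists>B. \<forall>i. a (Suc i) \<le> B")
  case True
  then obtain B where B: "\<forall>i. a (Suc i) \<le> B" by blast
  have "{m. \<forall>i\<in>{1..Suc m}. a i \<le> B * a (Suc (Suc m))} = UNIV"
  proof (intro set_eqI iffI)
    fix m
    show "m \<in> {m. \<forall>i\<in>{1..Suc m}. a i \<le> B * a (Suc (Suc m))}"
    proof (intro CollectI ballI)
      fix i assume i: "i \<in> {1..Suc m}"
      then obtain j where j: "i = Suc j" by (cases i) auto
      have "a i \<le> B" using B j by simp
      also have "B \<le> B * a (Suc (Suc m))" using cf_facts(4)[of "Suc m"] by simp
      finally show "a i \<le> B * a (Suc (Suc m))" .
    qed
  qed simp
  thus ?thesis by (intro exI[of _ B]) simp
next
  case False
  have "infinite {m. \<forall>i\<in>{1..Suc m}. a i \<le> 1 * a (Suc (Suc m))}"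
    unfolding infinite_nat_iff_unbounded_le
  proof
    fix N
    define A where "A = Max (a ` {1..N+2})"
    have Afin: "a i \<le> A" if "i \<in> {1..N+2}" for i unfolding A_def using that by (intro Max_ge) auto
    from False have "\<exists>i. \<not> a (Suc i) \<le> A" by blast
    then obtain i0 where "\<not> a (Suc i0) \<le> A" by blast
    hence i0: "a (Suc i0) > A" by simp
    define P where "P k = (1 \<le> k \<and> A < a k)" for k
    have Pex: "P (Suc i0)" unfolding P_def using i0 by simp
    define k where "k = (LEAST k. P k)"
    have Pk: "P k" unfolding k_def by (rule LeastI[of P, OF Pex])
    have below: "\<not> P i" if "i < k" for i using that unfolding k_def by (rule not_less_Least)
    have kbig: "k > N + 2"
    proof (rule ccontr)
      assume "\<not> N + 2 < k"
      hence "k \<in> {1..N+2}" using Pk unfolding P_def by simp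
      hence "a k \<le> A" by (rule Afin)
      thus False using Pk unfolding P_def by simp
    qed
    define m where "m = k - 2"
    have km: "k = Suc (Suc m)" unfolding m_def using kbig by simp
    have "\<forall>i\<in>{1..Suc m}. a i \<le> 1 * a (Suc (Suc m))"
    proof
      fix i assume i: "i \<in> {1..Suc m}"
      have ik: "i < k" "1 \<le> i" using i km by auto
      have "\<not> P i" by (rule below[OF ik(1)])
      hence "a i \<le> A" using ik(2) unfolding P_def by simp
      thus "a i \<le> 1 * a (Suc (Suc m))" using Pk km unfolding P_def by simp
    qed
    moreover have "m \<ge> N" unfolding m_def using kbig by simp
    ultimately show "\<exists>m\<ge>N. m \<in> {m. \<forall>i\<in>{1..Suc m}. a i \<le> 1 * a (Suc (Suc m))}" by blast
  qed
  thus ?thesis by blast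
qed

lemma main_result: "\<exists>r. strict_mono r \<and> convergent (\<lambda>n. sudler (cf_denom \<alpha> (r n)) \<alpha>)"
proof -
  obtain M :: nat where inf: "infinite {m. \<forall>i\<in>{1..Suc m}. a i \<le> M * a (Suc (Suc m))}"
    using good_indices by blast
  obtain r :: "nat \<Rightarrow> nat" where r: "strict_mono r" "\<And>n. r n \<in> {m. \<forall>i\<in>{1..Suc m}. a i \<le> M * a (Suc (Suc m))}"
    using infinite_enumerate[OF inf] by blast
  define C where "C = exp (20 + 90 * real M)"
  define y where "y n = sudler (q (Suc (r n))) \<alpha>" for n
  have ynn: "0 \<le> y n" for n unfolding y_def sudler_def by (intro prod_nonneg) auto
  have yb: "y n \<le> C" for n
  proof -
    have Mi: "\<And>i. i \<in> {1..Suc (r n)} \<Longrightarrow> real (a i) \<le> real M * real (a (Suc (Suc (r n))))"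
      using r(2)[of n] by (metis (mono_tags, lifting) mem_Collect_eq of_nat_le_iff of_nat_mult)
    have M0: "0 \<le> real M" by simp
    have l: "ln (y n) \<le> 20 + 90 * real M" unfolding y_def by (rule ln_sudler_bound[OF Mi M0])
    show ?thesis
    proof (cases "y n = 0")
      case True thus ?thesis unfolding C_def by simp
    next
      case False
      hence "0 < y n" using ynn[of n] by simp
      hence "y n = exp (ln (y n))" by simp
      also have "\<dots> \<le> C" unfolding C_def using l by simp
      finally show ?thesis .
    qed
  qed
  obtain f :: "nat \<Rightarrow> nat" where f: "strict_mono f" "monoseq (\<lambda>n. y (f n))"
    using seq_monosub[of y] by blast
  have "Bseq (\<lambda>n. y (f n))"
    by (rule BseqI'[of _ C]) (use ynn yb in simp)
  hence conv: "convergent (\<lambda>n. y (f n))" using f(2) by (rule Bseq_monoseq_convergent)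
  have sm: "strict_mono (\<lambda>n. Suc (r (f n)))"
    using r(1) f(1) unfolding strict_mono_def by simp
  show ?thesis
    by (rule exI[of _ "\<lambda>n. Suc (r (f n))"]) (use sm conv in \<open>simp add: y_def\<close>)
qed

end

theorem corollary1p4:
  fixes \<alpha> :: real
  assumes "0 < \<alpha>" and "\<alpha> < 1" and "\<alpha> \<notin> \<rat>"
  shows "\<exists>r. strict_mono r \<and> convergent (\<lambda>n. sudler (cf_denom \<alpha> (r n)) \<alpha>)"
  by (rule main_result[OF assms])


end
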